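(* Let $p\in(0,1]$. Let $Q=(q_{j,k})_{j,k\geq 0}$ be the generator on $\mathbb N_0$ with $q_{j,j+1}=jp$, $q_{j,k}=\binom{j}{k}p^k(1-p)^{j-k}$ for $0\leq k\leq j-1$, $q_{j,j}=-(jp+1-p^j)$, and $q_{j,k}=0$ otherwise, and let $(D_t)_{t\geq0}$ be a continuous-time Markov chain with generator $Q$. Let $\bar Q=(\bar q_{j,k})_{j,k\geq1}$ be the generator on $\mathbb N=\{1,2,\dots\}$ with $\bar q_{j,k}=\binom{j-1}{k-1}p^k(1-p)^{j-k}$ for $1\leq k\leq j-1$, $\bar q_{j,j+1}=(j+1)p$, $\bar q_{j,j}=p^j-(2+j)p$, and $\bar q_{j,k}=0$ otherwise. Suppose $\bar Q$ defines a positive recurrent Markov chain, with stationary distribution $u=(u_k)_{k\geq1}$; set $m_k=u_k/k$ and $a_k=m_k/\sum_{i\geq1}m_i$. Then for any $j,k\geq1$, $$\lim_{t\to\infty}\mathbb P(D_t=k\mid D_0=j)\,e^{(1-2p)t}=j\,m_k,$$ and furthermore $\mathbb P(D_t=k\mid D_0=j,\ D_t\geq1)\to a_k$ as $t\to\infty$.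
   Context: $D_t$ models the degree of a tracked vertex in the continuous-time partial duplication graph; $0$ is absorbing for $Q$. *)

theory Defs
  imports "HOL-Analysis.Analysis"
begin

definition Qgen :: "real \<Rightarrow> nat \<Rightarrow> nat \<Rightarrow> real" where
  "Qgen p j k =
     (if k = j + 1 then real j * p
      else if k < j then real (j choose k) * p ^ k * (1 - p) ^ (j - k)
      else if k = j then - (real j * p + 1 - p ^ j)
      else 0)"

text \<open>Generator Qbar on the state space {1,2,...} (only entries with j,k >= 1 are used).\<close>
definition Qbar :: "real \<Rightarrow> nat \<Rightarrow> nat \<Rightarrow> real" where
  "Qbar p j k =
     (if 1 \<le> k \<and> k < j then real ((j - 1) choose (k - 1)) * p ^ k * (1 - p) ^ (j - k)
      else if k = j + 1 then real (j + 1) * p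
      else if k = j then p ^ j - (2 + real j) * p
      else 0)"

text \<open>P is the (honest) transition function of a continuous-time Markov chain on the
  state space S with generator G: P t j k = Prob(X_t = k | X_0 = j).\<close>
definition ctmc_transition :: "nat set \<Rightarrow> (nat \<Rightarrow> nat \<Rightarrow> real) \<Rightarrow> (real \<Rightarrow> nat \<Rightarrow> nat \<Rightarrow> real) \<Rightarrow> bool" where
  "ctmc_transition S G P \<longleftrightarrow>
     (\<forall>t\<ge>0. \<forall>j\<in>S. \<forall>k\<in>S. P t j k \<ge> 0) \<and>
     (\<forall>t\<ge>0. \<forall>j\<in>S. ((\<lambda>k. P t j k) has_sum 1) S) \<and>
     (\<forall>j\<in>S. \<forall>k\<in>S. P 0 j k = (if j = k then 1 else 0)) \<and>
     (\<forall>s\<ge>0. \<forall>t\<ge>0. \<forall>j\<in>S. \<forall>k\<in>S. ((\<lambda>l. P s j l * P t l k) has_sum P (s + t) j k) S) \<and>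
     (\<forall>j\<in>S. \<forall>k\<in>S. ((\<lambda>t. P t j k) has_real_derivative G j k) (at 0 within {0..}))"

definition stationary_distribution :: "nat set \<Rightarrow> (real \<Rightarrow> nat \<Rightarrow> nat \<Rightarrow> real) \<Rightarrow> (nat \<Rightarrow> real) \<Rightarrow> bool" where
  "stationary_distribution S P u \<longleftrightarrow>
     (\<forall>k\<in>S. u k \<ge> 0) \<and> (u has_sum 1) S \<and>
     (\<forall>t\<ge>0. \<forall>k\<in>S. ((\<lambda>j. u j * P t j k) has_sum u k) S)"

end

theory Submission imports Defs "HOL-Library.Diagonal_Subsequence" begin

lemma ct_nonneg: "ctmc_transition S G P \<Longrightarrow> 0 \<le> t \<Longrightarrow> j\<in>S \<Longrightarrow> k\<in>S \<Longrightarrow> 0 \<le> P t j k"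
  unfolding ctmc_transition_def by blast
lemma ct_sum: "ctmc_transition S G P \<Longrightarrow> 0 \<le> t \<Longrightarrow> j\<in>S \<Longrightarrow> ((\<lambda>k. P t j k) has_sum 1) S"
  unfolding ctmc_transition_def by blast
lemma ct_init: "ctmc_transition S G P \<Longrightarrow> j\<in>S \<Longrightarrow> k\<in>S \<Longrightarrow> P 0 j k = (if j = k then 1 else 0)"
  unfolding ctmc_transition_def by blast
lemma ct_CK: "ctmc_transition S G P \<Longrightarrow> 0 \<le> s \<Longrightarrow> 0 \<le> t \<Longrightarrow> j\<in>S \<Longrightarrow> k\<in>S \<Longrightarrow>
   ((\<lambda>l. P s j l * P t l k) has_sum P (s + t) j k) S"
  unfolding ctmc_transition_def by blast
lemma ct_deriv: "ctmc_transition S G P \<Longrightarrow> j\<in>S \<Longrightarrow> k\<in>S \<Longrightarrow>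
   ((\<lambda>t. P t j k) has_real_derivative G j k) (at 0 within {0..})"
  unfolding ctmc_transition_def by blast

lemma has_sum_diff_finite:
  fixes f :: "'a \<Rightarrow> real"
  assumes "(f has_sum s) S" "finite F" "F \<subseteq> S"
  shows "(f has_sum (s - sum f F)) (S - F)"
proof -
  have "f summable_on (S - F)" using assms(1) summable_on_subset by (metis Diff_subset has_sum_imp_summable)
  then have h1: "(f has_sum infsum f (S - F)) (S - F)" by (simp add: has_sum_infsum)
  have h2: "(f has_sum sum f F) F" using assms(2) by simp
  have "(f has_sum (sum f F + infsum f (S - F))) (F \<union> (S - F))"
    by (rule has_sum_Un_disjoint[OF h2 h1]) auto
  moreover have "F \<union> (S - F) = S" using assms(3) by auto
  ultimately have "(f has_sum (sum f F + infsum f (S - F))) S" by simp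
  then have "s = sum f F + infsum f (S - F)" using assms(1) has_sum_unique by blast
  then show ?thesis using h1 by (simp add: algebra_simps)
qed

lemma ct_le1: assumes C: "ctmc_transition S G P" and "0 \<le> t" "j\<in>S" "k\<in>S" shows "P t j k \<le> 1"
proof -
  have "sum (\<lambda>k. P t j k) {k} \<le> 1"
    by (rule finite_sum_le_has_sum[OF ct_sum[OF C assms(2,3)]]) (use assms ct_nonneg[OF C] in auto)
  then show ?thesis by simp
qed

lemma ct_CK_ge: assumes C: "ctmc_transition S G P" and "0 \<le> s" "0 \<le> t" "a\<in>S" "b\<in>S" "c\<in>S"
  shows "P s a b * P t b c \<le> P (s + t) a c"
proof -
  have "sum (\<lambda>l. P s a l * P t l c) {b} \<le> P (s + t) a c"
    by (rule finite_sum_le_has_sum[OF ct_CK[OF C assms(2,3,4,6)]])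
       (use assms ct_nonneg[OF C] in auto)
  then show ?thesis by simp
qed

lemma ct_split:
  assumes C: "ctmc_transition S G P" and "0 \<le> h" "0 \<le> s" "i\<in>S" "k\<in>S" "finite F" "F \<subseteq> S"
  obtains E where "P (h + s) i k = (\<Sum>l\<in>F. P h i l * P s l k) + E" "0 \<le> E"
    "E \<le> 1 - (\<Sum>l\<in>F. P h i l)"
proof -
  let ?f = "\<lambda>l. P h i l * P s l k"
  have hs: "(?f has_sum (P (h + s) i k - sum ?f F)) (S - F)"
    by (rule has_sum_diff_finite[OF ct_CK[OF C assms(2,3,4,5)] assms(6,7)])
  have hs2: "((\<lambda>l. P h i l) has_sum (1 - (\<Sum>l\<in>F. P h i l))) (S - F)"
    by (rule has_sum_diff_finite[OF ct_sum[OF C assms(2,4)] assms(6,7)])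
  have "0 \<le> P (h + s) i k - sum ?f F"
    by (rule has_sum_nonneg[OF hs]) (use assms ct_nonneg[OF C] in auto)
  moreover have "P (h + s) i k - sum ?f F \<le> 1 - (\<Sum>l\<in>F. P h i l)"
    by (rule has_sum_mono[OF hs hs2])
       (use assms ct_nonneg[OF C] ct_le1[OF C] in \<open>auto intro!: mult_left_le\<close>)
  ultimately show ?thesis using that[of "P (h + s) i k - sum ?f F"] by auto
qed

lemma ct_diff_bound:
  assumes C: "ctmc_transition S G P" and "0 \<le> h" "0 \<le> s" "i\<in>S" "k\<in>S"
  shows "\<bar>P (h + s) i k - P s i k\<bar> \<le> 1 - P h i i"
proof -
  obtain E where E: "P (h + s) i k = (\<Sum>l\<in>{i}. P h i l * P s l k) + E" "0 \<le> E"
    "E \<le> 1 - (\<Sum>l\<in>{i}. P h i l)"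
    using ct_split[OF C assms(2-5), of "{i}"] assms by auto
  have a: "0 \<le> P h i i" "P h i i \<le> 1" "0 \<le> P s i k" "P s i k \<le> 1"
    using assms ct_nonneg[OF C] ct_le1[OF C] by auto
  have "P h i i * P s i k \<le> P s i k" using a by (simp add: mult_left_le_one_le)
  moreover have "P s i k - P h i i * P s i k \<le> 1 - P h i i"
  proof -
    have "P s i k - P h i i * P s i k = (1 - P h i i) * P s i k" by algebra
    also have "\<dots> \<le> (1 - P h i i) * 1" using a by (intro mult_left_mono) auto
    finally show ?thesis by simp
  qed
  ultimately show ?thesis using E a by auto
qed

lemma ct_cont0:
  assumes C: "ctmc_transition S G P" and "i\<in>S" "k\<in>S"
  shows "continuous (at 0 within {0..}) (\<lambda>t. P t i k)"
  using ct_deriv[OF C assms(2,3)] has_derivative_continuous has_field_derivative_imp_has_derivative by blast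

lemma ct_cont:
  assumes C: "ctmc_transition S G P" and "i\<in>S" "k\<in>S"
  shows "continuous_on {0..} (\<lambda>t. P t i k)"
proof (unfold continuous_on_iff, intro ballI allI impI)
  fix x e :: real assume x: "x \<in> {0..}" and e: "0 < e"
  obtain d where d: "d > 0" "\<forall>x'\<in>{0..}. dist x' 0 < d \<longrightarrow> dist (P x' i i) (P 0 i i) < e"
    using ct_cont0[OF C assms(2,2)] e unfolding continuous_within_eps_delta by blast
  have P0: "P 0 i i = 1" using ct_init[OF C assms(2,2)] by simp
  show "\<exists>d>0. \<forall>x'\<in>{0..}. dist x' x < d \<longrightarrow> dist (P x' i k) (P x i k) < e"
  proof (intro exI[of _ d] conjI ballI impI)
    show "d > 0" by fact
    fix y :: real assume y: "y \<in> {0..}" "dist y x < d"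
    show "dist (P y i k) (P x i k) < e"
    proof (cases "x \<le> y")
      case True
      have "\<bar>P ((y - x) + x) i k - P x i k\<bar> \<le> 1 - P (y - x) i i"
        using ct_diff_bound[OF C _ _ assms(2,3), of "y - x" x] True x by auto
      moreover have "dist (P (y - x) i i) 1 < e" using d(2)[rule_format, of "y - x"] y True P0
        by (auto simp: dist_real_def)
      ultimately show ?thesis by (auto simp: dist_real_def)
    next
      case False
      have "\<bar>P ((x - y) + y) i k - P y i k\<bar> \<le> 1 - P (x - y) i i"
        using ct_diff_bound[OF C _ _ assms(2,3), of "x - y" y] False y by auto
      moreover have "dist (P (x - y) i i) 1 < e" using d(2)[rule_format, of "x - y"] y False P0
        by (auto simp: dist_real_def)
      ultimately show ?thesis by (auto simp: dist_real_def)
    qed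
  qed
qed

lemma ct_back:
  assumes C: "ctmc_transition S G P" and i: "i\<in>S" and k: "k\<in>S"
    and F: "finite F" "F \<subseteq> S" "i \<in> F"
    and G0: "(\<Sum>l\<in>F. G i l) = 0" and t: "0 < t"
  shows "((\<lambda>s. P s i k) has_real_derivative (\<Sum>l\<in>F. G i l * P t l k)) (at t within {0..t})"
proof -
  define A where "A l y = (P (t - y) i l - P 0 i l) / (t - y)" for l y
  define E where "E y = P t i k - (\<Sum>l\<in>F. P (t - y) i l * P y l k)" for y
  have filt: "filterlim (\<lambda>y. t - y) (at 0 within {0..}) (at t within {0..t})"
    unfolding filterlim_at
  proof
    show "eventually (\<lambda>y. t - y \<in> {0..} \<and> t - y \<noteq> 0) (at t within {0..t})"
      unfolding eventually_at_filter by (intro always_eventually) auto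
    have "((\<lambda>y. t - y) \<longlongrightarrow> t - t) (at t within {0..t})" by (intro tendsto_intros)
    then show "((\<lambda>y. t - y) \<longlongrightarrow> 0) (at t within {0..t})" by simp
  qed
  have ev: "eventually (\<lambda>y. y \<in> {0..<t}) (at t within {0..t})"
    by (auto simp: eventually_at_filter)
  have Alim: "(A l \<longlongrightarrow> G i l) (at t within {0..t})" if "l \<in> F" for l
  proof -
    have "((\<lambda>h. (P h i l - P 0 i l) / (h - 0)) \<longlongrightarrow> G i l) (at 0 within {0..})"
    proof -
      have "l \<in> S" using that F by auto
      from ct_deriv[OF C i this] show ?thesis unfolding has_field_derivative_iff .
    qed
    then have "((\<lambda>h. (P h i l - P 0 i l) / h) \<longlongrightarrow> G i l) (at 0 within {0..})" by simp
    from filterlim_compose[OF this filt] show ?thesis unfolding A_def by (simp add: o_def)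
  qed
  have Pc: "((\<lambda>y. P y l k) \<longlongrightarrow> P t l k) (at t within {0..t})" if "l \<in> S" for l
  proof -
    have "continuous_on {0..t} (\<lambda>y. P y l k)"
      by (rule continuous_on_subset[OF ct_cont[OF C that k]]) auto
    then show ?thesis using t by (simp add: continuous_on_def)
  qed
  have P0sum: "(\<Sum>l\<in>F. P 0 i l * P y l k) = P y i k" for y
  proof -
    have "(\<Sum>l\<in>F. P 0 i l * P y l k) = (\<Sum>l\<in>F. (if l = i then P y l k else 0))"
      by (rule sum.cong) (use F i ct_init[OF C i] in auto)
    also have "\<dots> = P y i k" using F by simp
    finally show ?thesis .
  qed
  have P0sum1: "(\<Sum>l\<in>F. P 0 i l) = 1"
  proof -
    have "(\<Sum>l\<in>F. P 0 i l) = (\<Sum>l\<in>F. (if l = i then 1 else 0))"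
      by (rule sum.cong) (use F i ct_init[OF C i] in auto)
    also have "\<dots> = 1" using F by simp
    finally show ?thesis .
  qed
  have Eprop: "0 \<le> E y \<and> E y \<le> 1 - (\<Sum>l\<in>F. P (t - y) i l)" if y: "y \<in> {0..<t}" for y
  proof -
    obtain E' where E': "P ((t - y) + y) i k = (\<Sum>l\<in>F. P (t - y) i l * P y l k) + E'" "0 \<le> E'"
      "E' \<le> 1 - (\<Sum>l\<in>F. P (t - y) i l)"
      using ct_split[OF C _ _ i k F(1,2), of "t - y" y] y by auto
    then have "E' = E y" unfolding E_def by simp
    then show ?thesis using E' by simp
  qed
  have quot: "(P y i k - P t i k) / (y - t) = (\<Sum>l\<in>F. A l y * P y l k) + E y / (t - y)"
    if y: "y \<in> {0..<t}" for y
  proof -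
    have ne: "t - y \<noteq> 0" using y by auto
    have X: "(\<Sum>l\<in>F. (P (t - y) i l - P 0 i l) * P y l k) = (\<Sum>l\<in>F. P (t-y) i l * P y l k) - (\<Sum>l\<in>F. P 0 i l * P y l k)"
      by (simp add: left_diff_distrib sum_subtractf)
    have "P t i k - P y i k = (\<Sum>l\<in>F. (P (t - y) i l - P 0 i l) * P y l k) + E y"
      using P0sum[of y] X unfolding E_def by linarith
    moreover have "(\<Sum>l\<in>F. A l y * P y l k) = (\<Sum>l\<in>F. (P (t-y) i l - P 0 i l) * P y l k) / (t-y)"
      unfolding A_def sum_divide_distrib by (rule sum.cong) auto
    ultimately have "(P t i k - P y i k) / (t - y) = (\<Sum>l\<in>F. A l y * P y l k) + E y / (t - y)"
      by (simp add: add_divide_distrib)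
    moreover have "(P y i k - P t i k) / (y - t) = (P t i k - P y i k) / (t - y)"
      by (metis minus_diff_eq minus_divide_divide)
    ultimately show ?thesis by simp
  qed
  have bnd: "0 \<le> E y / (t - y) \<and> E y / (t - y) \<le> - (\<Sum>l\<in>F. A l y)" if y: "y \<in> {0..<t}" for y
  proof -
    have pos: "0 < t - y" using y by auto
    have "1 - (\<Sum>l\<in>F. P (t - y) i l) = - (\<Sum>l\<in>F. (P (t - y) i l - P 0 i l))"
      using P0sum1 by (simp add: sum_subtractf)
    then have "(1 - (\<Sum>l\<in>F. P (t - y) i l)) / (t - y) = - (\<Sum>l\<in>F. A l y)"
      unfolding A_def by (simp add: sum_divide_distrib)
    moreover have "E y / (t - y) \<le> (1 - (\<Sum>l\<in>F. P (t - y) i l)) / (t - y)"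
      using Eprop[OF y] pos by (simp add: divide_right_mono)
    ultimately show ?thesis using Eprop[OF y] pos by simp
  qed
  have lim1: "((\<lambda>y. \<Sum>l\<in>F. A l y * P y l k) \<longlongrightarrow> (\<Sum>l\<in>F. G i l * P t l k)) (at t within {0..t})"
    by (intro tendsto_sum tendsto_mult Alim Pc) (use F in auto)
  have lim2: "((\<lambda>y. E y / (t - y)) \<longlongrightarrow> 0) (at t within {0..t})"
  proof (rule tendsto_sandwich[of "\<lambda>_. 0" _ _ "\<lambda>y. - (\<Sum>l\<in>F. A l y)"])
    show "eventually (\<lambda>y. 0 \<le> E y / (t - y)) (at t within {0..t})"
      using ev by eventually_elim (use bnd in auto)
    show "eventually (\<lambda>y. E y / (t - y) \<le> - (\<Sum>l\<in>F. A l y)) (at t within {0..t})"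
      using ev by eventually_elim (use bnd in auto)
    have "((\<lambda>y. - (\<Sum>l\<in>F. A l y)) \<longlongrightarrow> - (\<Sum>l\<in>F. G i l)) (at t within {0..t})"
      by (intro tendsto_minus tendsto_sum Alim) 
    then show "((\<lambda>y. - (\<Sum>l\<in>F. A l y)) \<longlongrightarrow> 0) (at t within {0..t})" using G0 by simp
  qed auto
  have "((\<lambda>y. (P y i k - P t i k) / (y - t)) \<longlongrightarrow> (\<Sum>l\<in>F. G i l * P t l k) + 0) (at t within {0..t})"
  proof (rule Lim_transform_eventually[OF tendsto_add[OF lim1 lim2]])
    show "eventually (\<lambda>y. (\<Sum>l\<in>F. A l y * P y l k) + E y / (t - y) = (P y i k - P t i k) / (y - t)) (at t within {0..t})"
      using ev by eventually_elim (use quot in auto)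
  qed
  then show ?thesis unfolding has_field_derivative_iff by simp
qed

lemma max_principle:
  fixes z z' :: "nat \<Rightarrow> real \<Rightarrow> real" and I U :: "nat set" and T :: real
  assumes I: "finite I" "I \<subseteq> U"
    and cont: "\<And>i. i \<in> I \<Longrightarrow> continuous_on {0..T} (z i)"
    and der: "\<And>i t. i \<in> I \<Longrightarrow> 0 < t \<Longrightarrow> t \<le> T \<Longrightarrow> (z i has_real_derivative z' i t) (at t within {0..t})"
    and init: "\<And>i. i \<in> I \<Longrightarrow> z i 0 < 0"
    and out: "\<And>i t. i \<in> U \<Longrightarrow> i \<notin> I \<Longrightarrow> 0 \<le> t \<Longrightarrow> t \<le> T \<Longrightarrow> z i t < 0"
    and key: "\<And>i t. i \<in> I \<Longrightarrow> 0 < t \<Longrightarrow> t \<le> T \<Longrightarrow> z i t = 0 \<Longrightarrow> (\<forall>l\<in>U. z l t \<le> 0) \<Longrightarrow> z' i t < 0"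
    and it: "i \<in> U" "0 \<le> t" "t \<le> T"
  shows "z i t < 0"
proof (rule ccontr)
  assume nz: "\<not> z i t < 0"
  then have iI: "i \<in> I" using out it by force
  define A where "A = (\<Union>j\<in>I. {0..T} \<inter> z j -` {0..})"
  have clA: "closed A" unfolding A_def
    by (intro closed_UN I(1) ballI continuous_closed_preimage cont) auto
  have tA: "t \<in> A" unfolding A_def using iI it nz by (auto intro!: bexI[of _ i])
  have bdd: "bdd_below A" unfolding A_def by (intro bdd_belowI[of _ 0]) auto
  define \<tau> where "\<tau> = Inf A"
  have \<tau>A: "\<tau> \<in> A" unfolding \<tau>_def using closed_contains_Inf[OF _ bdd clA] tA by auto
  have \<tau>le: "\<tau> \<le> s" if "s \<in> A" for s unfolding \<tau>_def by (rule cInf_lower[OF that bdd])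
  from \<tau>A obtain j where j: "j \<in> I" "0 \<le> \<tau>" "\<tau> \<le> T" "z j \<tau> \<ge> 0" unfolding A_def by auto
  have \<tau>pos: "0 < \<tau>" using j init[OF j(1)] by (cases "\<tau> = 0") auto
  have all: "\<forall>l\<in>U. z l \<tau> \<le> 0"
  proof (intro ballI)
    fix l assume l: "l \<in> U"
    show "z l \<tau> \<le> 0"
    proof (cases "l \<in> I")
      case False then show ?thesis using out[OF l False j(2,3)] by simp
    next
      case True
      show ?thesis
      proof (rule ccontr)
        assume pos: "\<not> z l \<tau> \<le> 0"
        obtain d where d: "d > 0" "\<forall>x'\<in>{0..T}. dist x' \<tau> < d \<longrightarrow> dist (z l x') (z l \<tau>) < z l \<tau>"
          using cont[OF True] pos j(2,3) unfolding continuous_on_iff by (meson atLeastAtMost_iff not_le)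
        define s where "s = \<tau> - min d \<tau> / 2"
        have s: "0 \<le> s" "s < \<tau>" "s \<le> T" "dist s \<tau> < d" using d(1) \<tau>pos j(3)
          unfolding s_def dist_real_def by (auto simp: min_def)
        then have "dist (z l s) (z l \<tau>) < z l \<tau>" using d(2) by auto
        then have "z l s > 0" by (auto simp: dist_real_def)
        then have "s \<in> A" unfolding A_def using True s by (auto intro!: bexI[of _ l])
        then show False using \<tau>le s(2) by fastforce
      qed
    qed
  qed
  then have zj: "z j \<tau> = 0" using j it(1) I(2) by force
  have neg: "z' j \<tau> < 0" using key[OF j(1) \<tau>pos j(3) zj all] .
  obtain d where d: "d > 0" "\<forall>h>0. \<tau> - h \<in> {0..\<tau>} \<longrightarrow> h < d \<longrightarrow> z j \<tau> < z j (\<tau> - h)"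
    using has_real_derivative_neg_dec_left[OF der[OF j(1) \<tau>pos j(3)] neg] by blast
  define h where "h = min d \<tau> / 2"
  have h: "h > 0" "\<tau> - h \<in> {0..\<tau>}" "h < d" using d(1) \<tau>pos unfolding h_def by (auto simp: min_def)
  then have "z j (\<tau> - h) > 0" using d(2) zj by auto
  then have "\<tau> - h \<in> A" unfolding A_def using j h by (auto intro!: bexI[of _ j])
  then show False using \<tau>le h(1) by fastforce
qed

lemma gen_V_bound:
  fixes G :: "nat \<Rightarrow> nat \<Rightarrow> real" and V :: "nat \<Rightarrow> real"
  assumes F: "finite F" "i \<in> F" "Suc i \<in> F" "F \<subseteq> {..Suc i}"
    and rs: "(\<Sum>l\<in>F. G i l) = 0" and nn: "\<And>l. l \<in> F \<Longrightarrow> l \<noteq> i \<Longrightarrow> 0 \<le> G i l"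
    and mono: "\<And>l. l \<le> i \<Longrightarrow> V l \<le> V i"
  shows "(\<Sum>l\<in>F. G i l * V l) \<le> G i (Suc i) * (V (Suc i) - V i)"
proof -
  have "(\<Sum>l\<in>F. G i l * V l) = (\<Sum>l\<in>F. G i l * (V l - V i))"
    using rs by (simp add: right_diff_distrib sum_subtractf sum_distrib_right[symmetric])
  also have "\<dots> \<le> (\<Sum>l\<in>F. (if l = Suc i then G i l * (V l - V i) else 0))"
  proof (rule sum_mono)
    fix l assume l: "l \<in> F"
    show "G i l * (V l - V i) \<le> (if l = Suc i then G i l * (V l - V i) else 0)"
    proof (cases "l = Suc i")
      case False
      then have "l \<le> i" using l F(4) by auto
      then show ?thesis using False nn[OF l] mono[of l]
        by (cases "l = i") (auto simp: mult_nonneg_nonpos)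
    qed simp
  qed
  also have "\<dots> = G i (Suc i) * (V (Suc i) - V i)" using F by simp
  finally show ?thesis .
qed

lemma ode_nonpos:
  fixes y :: "nat \<Rightarrow> real \<Rightarrow> real" and G :: "nat \<Rightarrow> nat \<Rightarrow> real" and F :: "nat \<Rightarrow> nat set"
    and U :: "nat set"
  assumes F: "\<And>i. i \<in> U \<Longrightarrow> finite (F i) \<and> F i \<subseteq> U \<and> i \<in> F i \<and> Suc i \<in> F i \<and> F i \<subseteq> {..Suc i}"
    and rs: "\<And>i. i \<in> U \<Longrightarrow> (\<Sum>l\<in>F i. G i l) = 0"
    and nn: "\<And>i l. i \<in> U \<Longrightarrow> l \<in> F i \<Longrightarrow> l \<noteq> i \<Longrightarrow> 0 \<le> G i l"
    and rate: "\<And>i. i \<in> U \<Longrightarrow> G i (Suc i) * (2 * real i + 1) \<le> 3 * (real i ^ 2 + 1)"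
    and cont: "\<And>i. i \<in> U \<Longrightarrow> continuous_on {0..} (y i)"
    and der: "\<And>i t. i \<in> U \<Longrightarrow> 0 < t \<Longrightarrow> (y i has_real_derivative (\<Sum>l\<in>F i. G i l * y l t)) (at t within {0..t})"
    and init: "\<And>i. i \<in> U \<Longrightarrow> y i 0 = 0"
    and bound: "\<And>T. \<exists>B. \<forall>i\<in>U. \<forall>t\<in>{0..T}. \<bar>y i t\<bar> \<le> B * (real i + 1)"
    and ii: "ii \<in> U" and tt: "0 \<le> tt"
  shows "y ii tt \<le> 0"
proof -
  define V where "V i = real i ^ 2 + 1" for i
  have Vpos: "V i > 0" for i unfolding V_def by (simp add: add_nonneg_pos)
  have lt: "y ii tt < \<epsilon> * exp (4 * tt) * V ii" if eps: "\<epsilon> > 0" for \<epsilon>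
  proof -
    obtain B0 where B0: "\<forall>i\<in>U. \<forall>t\<in>{0..tt}. \<bar>y i t\<bar> \<le> B0 * (real i + 1)" using bound by blast
    define B where "B = max B0 1"
    have B: "\<forall>i\<in>U. \<forall>t\<in>{0..tt}. \<bar>y i t\<bar> \<le> B * (real i + 1)" "B \<ge> 1"
    proof -
      show "B \<ge> 1" unfolding B_def by simp
      show "\<forall>i\<in>U. \<forall>t\<in>{0..tt}. \<bar>y i t\<bar> \<le> B * (real i + 1)"
      proof (intro ballI)
        fix i t assume "i \<in> U" "t \<in> {0..tt}"
        then have "\<bar>y i t\<bar> \<le> B0 * (real i + 1)" using B0 by blast
        also have "\<dots> \<le> B * (real i + 1)" unfolding B_def by (intro mult_right_mono) auto
        finally show "\<bar>y i t\<bar> \<le> B * (real i + 1)" .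
      qed
    qed
    define N where "N = nat \<lceil>2 * B / \<epsilon>\<rceil> + 2"
    define z where "z i t = y i t - \<epsilon> * exp (4 * t) * V i" for i t
    define z' where "z' i t = (\<Sum>l\<in>F i. G i l * y l t) - \<epsilon> * (4 * exp (4 * t)) * V i" for i t
    define I where "I = {i\<in>U. i \<le> N}"
    have big: "B * (real i + 1) < \<epsilon> * V i" if "i > N" for i
    proof -
      have i2: "real i \<ge> 2" using that unfolding N_def by auto
      have "2 * B / \<epsilon> < real i" using that unfolding N_def by linarith
      then have "2 * B < \<epsilon> * real i" using eps by (simp add: field_simps)
      then have "2 * B * real i < \<epsilon> * real i * real i" using i2 by (intro mult_strict_right_mono) auto
      moreover have "B * (real i + 1) \<le> 2 * B * real i" using i2 B(2) by (simp add: algebra_simps)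
      ultimately have "B * (real i + 1) < \<epsilon> * real i ^ 2" by (simp add: power2_eq_square algebra_simps)
      also have "\<dots> \<le> \<epsilon> * V i" unfolding V_def using eps by simp
      finally show ?thesis .
    qed
    have "z ii tt < 0"
    proof (rule max_principle[where z = z and z' = z' and I = I and U = U and T = tt])
      show "finite I" "I \<subseteq> U" unfolding I_def by auto
      show "continuous_on {0..tt} (z i)" if "i \<in> I" for i
      proof -
        have c: "continuous_on {0..tt} (y i)"
          using cont[of i] that unfolding I_def by (auto elim: continuous_on_subset)
        show ?thesis unfolding z_def by (intro continuous_intros c)
      qed
      show "(z i has_real_derivative z' i t) (at t within {0..t})" if "i \<in> I" "0 < t" "t \<le> tt" for i t
      proof -
        have d: "(y i has_real_derivative (\<Sum>l\<in>F i. G i l * y l t)) (at t within {0..t})"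
          using der[of i t] that unfolding I_def by auto
        show ?thesis unfolding z_def z'_def
          by (rule derivative_eq_intros d refl)+ simp
      qed
      show "z i 0 < 0" if "i \<in> I" for i
        unfolding z_def using that init[of i] eps Vpos[of i] unfolding I_def by simp
      show "z i t < 0" if "i \<in> U" "i \<notin> I" "0 \<le> t" "t \<le> tt" for i t
      proof -
        have iN: "i > N" using that unfolding I_def by auto
        have "\<bar>y i t\<bar> \<le> B * (real i + 1)" using B(1) that by auto
        then have "y i t \<le> B * (real i + 1)" by linarith
        also have "\<dots> < \<epsilon> * V i" by (rule big[OF iN])
        also have "\<dots> \<le> \<epsilon> * exp (4 * t) * V i"
        proof -
          have "1 \<le> exp (4 * t)" using that by simp
          then have "\<epsilon> * V i * 1 \<le> \<epsilon> * V i * exp (4 * t)"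
            using eps Vpos[of i] by (intro mult_left_mono) auto
          then show ?thesis by (simp add: mult_ac)
        qed
        finally show ?thesis unfolding z_def by simp
      qed
      show "z' i t < 0" if iI: "i \<in> I" and t: "0 < t" "t \<le> tt" and zi: "z i t = 0"
        and all: "\<forall>l\<in>U. z l t \<le> 0" for i t
      proof -
        have iU: "i \<in> U" using iI unfolding I_def by auto
        note Fi = F[OF iU]
        define e where "e = \<epsilon> * exp (4 * t)"
        have e: "e > 0" unfolding e_def using eps by simp
        have yz: "y l t = z l t + e * V l" for l unfolding z_def e_def by simp
        have s1: "(\<Sum>l\<in>F i. G i l * z l t) \<le> 0"
        proof -
          have "(\<Sum>l\<in>F i. G i l * z l t) \<le> (\<Sum>l\<in>F i. 0)"
          proof (rule sum_mono)
            fix l assume l: "l \<in> F i"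
            show "G i l * z l t \<le> 0"
            proof (cases "l = i")
              case True then show ?thesis using zi by simp
            next
              case False then show ?thesis using nn[OF iU l False] all Fi l
                by (auto intro!: mult_nonneg_nonpos)
            qed
          qed
          then show ?thesis by simp
        qed
        have s2: "(\<Sum>l\<in>F i. G i l * V l) \<le> G i (Suc i) * (V (Suc i) - V i)"
          by (rule gen_V_bound) (use Fi rs[OF iU] nn[OF iU] in \<open>auto simp: V_def\<close>)
        also have "\<dots> \<le> 3 * V i"
        proof -
          have "V (Suc i) - V i = 2 * real i + 1" by (simp add: V_def power2_eq_square algebra_simps)
          then show ?thesis using rate[OF iU] unfolding V_def by simp
        qed
        finally have s2: "(\<Sum>l\<in>F i. G i l * V l) \<le> 3 * V i" .
        have "(\<Sum>l\<in>F i. G i l * y l t) = (\<Sum>l\<in>F i. G i l * z l t) + e * (\<Sum>l\<in>F i. G i l * V l)"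
          by (simp add: yz distrib_left sum.distrib sum_distrib_left mult_ac)
        also have "\<dots> \<le> 0 + e * (3 * V i)" using s1 s2 e by (intro add_mono mult_left_mono) auto
        finally have "(\<Sum>l\<in>F i. G i l * y l t) \<le> 3 * e * V i" by simp
        moreover have "3 * e * V i < 4 * e * V i" using e Vpos[of i] by simp
        ultimately show ?thesis unfolding z'_def e_def by (simp add: algebra_simps)
      qed
    qed (use ii tt in auto)
    then show ?thesis unfolding z_def by simp
  qed
  show ?thesis
  proof (rule ccontr)
    assume "\<not> y ii tt \<le> 0"
    then have pos: "y ii tt > 0" by simp
    define \<epsilon> where "\<epsilon> = y ii tt / (2 * exp (4 * tt) * V ii)"
    have "\<epsilon> > 0" unfolding \<epsilon>_def using pos Vpos[of ii] by simp
    from lt[OF this] have "y ii tt < y ii tt / 2"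
      unfolding \<epsilon>_def using Vpos[of ii] by (simp add: field_simps)
    then show False using pos by simp
  qed
qed

lemma diag_conv:
  fixes f :: "nat \<Rightarrow> nat \<Rightarrow> real"
  assumes bdd: "\<And>n k. \<bar>f n k\<bar> \<le> M"
  shows "\<exists>s. strict_mono (s::nat \<Rightarrow> nat) \<and> (\<forall>k. convergent (\<lambda>n. f (s n) k))"
proof -
  let ?P = "\<lambda>n. \<lambda>s. convergent (\<lambda>k. f (s k) n)"
  interpret nat: subseqs ?P
  proof (unfold convergent_def, unfold subseqs_def, auto)
    fix n :: nat and s :: "nat \<Rightarrow> nat" assume s: "strict_mono s"
    have "bounded {-M..M}"
      using bounded_closed_interval by auto
    moreover have "\<And>k. f (s k) n \<in> {-M..M}"
      using bdd by (simp add: abs_le_iff minus_le_iff)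
    ultimately have "\<exists>l s'. strict_mono s' \<and> ((\<lambda>k. f (s k) n) \<circ> s') \<longlonglongrightarrow> l"
      using compact_Icc compact_imp_seq_compact seq_compactE by metis
    thus "\<exists>s'. strict_mono (s'::nat\<Rightarrow>nat) \<and> (\<exists>l. (\<lambda>k. f (s (s' k)) n) \<longlonglongrightarrow> l)"
      by (auto simp: comp_def)
  qed
  define d where "d = nat.diagseq"
  have subseq: "strict_mono d"
    unfolding d_def using nat.subseq_diagseq by auto
  have rat_cnv: "?P n d" for n
  proof -
    have Pn_seqseq: "?P n (nat.seqseq (Suc n))"
      by (rule nat.seqseq_holds)
    have 1: "(\<lambda>k. f ((nat.seqseq (Suc n) \<circ> (\<lambda>k. nat.fold_reduce (Suc n) k
      (Suc n + k))) k) n) = (\<lambda>k. f (nat.seqseq (Suc n) k) n) \<circ>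
      (\<lambda>k. nat.fold_reduce (Suc n) k (Suc n + k))"
      by auto
    have 2: "?P n (d \<circ> ((+) (Suc n)))"
      unfolding d_def nat.diagseq_seqseq 1
      by (intro convergent_subseq_convergent Pn_seqseq nat.subseq_diagonal_rest)
    then obtain L where 3: "(\<lambda>na. f (d (na + Suc n)) n) \<longlonglongrightarrow> L"
      by (auto simp: add.commute dest: convergentD)
    then have "(\<lambda>k. f (d k) n) \<longlonglongrightarrow> L"
      by (rule LIMSEQ_offset)
    then show ?thesis
      by (auto simp: convergent_def)
  qed
  show ?thesis using subseq rat_cnv by blast
qed

lemma binom_sum_lt:
  fixes p :: real
  shows "(\<Sum>l<i. real (i choose l) * p ^ l * (1 - p) ^ (i - l)) = 1 - p ^ i"
proof -
  have "1 = (p + (1 - p)) ^ i" by simp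
  also have "\<dots> = (\<Sum>l\<le>i. real (i choose l) * p ^ l * (1 - p) ^ (i - l))"
    by (rule binomial_ring)
  also have "\<dots> = (\<Sum>l<i. real (i choose l) * p ^ l * (1 - p) ^ (i - l)) + p ^ i"
    by (simp add: lessThan_Suc_atMost[symmetric])
  finally show ?thesis by simp
qed

lemma Qgen_rowsum: "(\<Sum>l\<le>Suc i. Qgen p i l) = 0"
proof -
  have "{..Suc i} = insert (Suc i) (insert i {..<i})" by auto
  then have "(\<Sum>l\<le>Suc i. Qgen p i l) = Qgen p i (Suc i) + Qgen p i i + (\<Sum>l<i. Qgen p i l)"
    by simp
  also have "(\<Sum>l<i. Qgen p i l) = (\<Sum>l<i. real (i choose l) * p ^ l * (1 - p) ^ (i - l))"
    by (rule sum.cong) (auto simp: Qgen_def)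
  finally show ?thesis by (simp add: binom_sum_lt Qgen_def)
qed

lemma Qbar_lowsum:
  fixes p :: real
  assumes "1 \<le> i"
  shows "(\<Sum>l\<in>{1..<i}. real ((i - 1) choose (l - 1)) * p ^ l * (1 - p) ^ (i - l)) = p - p ^ i"
proof (cases i)
  case 0 then show ?thesis using assms by simp
next
  case (Suc n)
  have "(\<Sum>l\<in>{1..<i}. real ((i - 1) choose (l - 1)) * p ^ l * (1 - p) ^ (i - l))
      = (\<Sum>m<n. real ((i - 1) choose (Suc m - 1)) * p ^ Suc m * (1 - p) ^ (i - Suc m))"
    unfolding Suc by (rule sum.reindex_bij_witness[where i = Suc and j = "\<lambda>l. l - 1"]) auto
  also have "\<dots> = p * (\<Sum>m<n. real (n choose m) * p ^ m * (1 - p) ^ (n - m))"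
    unfolding Suc sum_distrib_left by (rule sum.cong) auto
  also have "\<dots> = p - p ^ i" unfolding binom_sum_lt Suc by (simp add: algebra_simps)
  finally show ?thesis .
qed

lemma Qbar_rowsum: assumes "1 \<le> i" shows "(\<Sum>l\<in>{1..Suc i}. Qbar p i l) = 0"
proof -
  have "{1..Suc i} = insert (Suc i) (insert i {1..<i})" using assms by auto
  then have "(\<Sum>l\<in>{1..Suc i}. Qbar p i l) = Qbar p i (Suc i) + Qbar p i i + (\<Sum>l\<in>{1..<i}. Qbar p i l)"
    by simp
  also have "(\<Sum>l\<in>{1..<i}. Qbar p i l) = (\<Sum>l\<in>{1..<i}. real ((i - 1) choose (l - 1)) * p ^ l * (1 - p) ^ (i - l))"
    by (rule sum.cong) (auto simp: Qbar_def)
  also have "\<dots> = p - p ^ i" by (rule Qbar_lowsum[OF assms])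
  also have "Qbar p i (Suc i) = (real i + 1) * p" by (simp add: Qbar_def)
  also have "Qbar p i i = p ^ i - (2 + real i) * p" by (simp add: Qbar_def)
  finally show ?thesis by (simp add: algebra_simps)
qed

lemma Qgen_nn: "0 \<le> p \<Longrightarrow> p \<le> 1 \<Longrightarrow> l \<noteq> i \<Longrightarrow> 0 \<le> Qgen p i l"
  by (auto simp: Qgen_def)

lemma Qbar_nn: "0 \<le> p \<Longrightarrow> p \<le> 1 \<Longrightarrow> l \<noteq> i \<Longrightarrow> 0 \<le> Qbar p i l"
  by (auto simp: Qbar_def)

lemma Qgen_rate: "0 \<le> p \<Longrightarrow> p \<le> 1 \<Longrightarrow> Qgen p i (Suc i) * (2 * real i + 1) \<le> 3 * (real i ^ 2 + 1)"
proof -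
  assume p: "0 \<le> p" "p \<le> 1"
  have "Qgen p i (Suc i) * (2 * real i + 1) = p * (real i * (2 * real i + 1))" by (simp add: Qgen_def)
  also have "\<dots> \<le> 1 * (real i * (2 * real i + 1))" using p by (intro mult_right_mono) auto
  also have "\<dots> \<le> 3 * (real i ^ 2 + 1)"
  proof -
    have "0 \<le> (real i - 1)^2" by simp
    then have "2 * real i \<le> real i ^ 2 + 1" by (simp add: power2_eq_square algebra_simps)
    then show ?thesis by (simp add: power2_eq_square algebra_simps)
  qed
  finally show ?thesis .
qed

lemma Qbar_rate: "0 \<le> p \<Longrightarrow> p \<le> 1 \<Longrightarrow> Qbar p i (Suc i) * (2 * real i + 1) \<le> 3 * (real i ^ 2 + 1)"
proof -
  assume p: "0 \<le> p" "p \<le> 1"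
  have "Qbar p i (Suc i) * (2 * real i + 1) = p * ((real i + 1) * (2 * real i + 1))" by (simp add: Qbar_def)
  also have "\<dots> \<le> 1 * ((real i + 1) * (2 * real i + 1))" using p by (intro mult_right_mono) auto
  also have "\<dots> \<le> 3 * (real i ^ 2 + 1)"
  proof -
    have "0 \<le> (real i - 1) * (real i - 2) \<or> i = 1"
    proof (cases "i \<le> 1")
      case True then have "i = 0 \<or> i = 1" by auto
      then show ?thesis by auto
    next
      case False then have "real i \<ge> 2" by simp
      then show ?thesis by simp
    qed
    then show ?thesis by (auto simp: power2_eq_square algebra_simps)
  qed
  finally show ?thesis .
qed

lemma Qgen_Qbar:
  assumes "1 \<le> l" "l \<le> Suc i" "1 \<le> i"
  shows "Qgen p i l * real l = real i * Qbar p i l + (if l = i then (2 * p - 1) * real i else 0)"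
proof -
  consider "l = Suc i" | "l = i" | "l < i" using assms by linarith
  then show ?thesis
  proof cases
    case 1 then show ?thesis by (simp add: Qgen_def Qbar_def algebra_simps)
  next
    case 2 then show ?thesis using assms by (simp add: Qgen_def Qbar_def algebra_simps)
  next
    case 3
    obtain n where n: "i = Suc n" using assms by (cases i) auto
    obtain m where m: "l = Suc m" using assms by (cases l) auto
    have "real (i choose l) * real l = real i * real ((i - 1) choose (l - 1))"
      unfolding n m using Suc_times_binomial_eq[of n m] by (simp only: of_nat_mult[symmetric]) (simp add: mult.commute)
    then show ?thesis using 3 assms by (simp add: Qgen_def Qbar_def algebra_simps)
  qed
qed

lemma ode_zero:
  fixes y :: "nat \<Rightarrow> real \<Rightarrow> real" and G :: "nat \<Rightarrow> nat \<Rightarrow> real" and F :: "nat \<Rightarrow> nat set"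
    and U :: "nat set"
  assumes F: "\<And>i. i \<in> U \<Longrightarrow> finite (F i) \<and> F i \<subseteq> U \<and> i \<in> F i \<and> Suc i \<in> F i \<and> F i \<subseteq> {..Suc i}"
    and rs: "\<And>i. i \<in> U \<Longrightarrow> (\<Sum>l\<in>F i. G i l) = 0"
    and nn: "\<And>i l. i \<in> U \<Longrightarrow> l \<in> F i \<Longrightarrow> l \<noteq> i \<Longrightarrow> 0 \<le> G i l"
    and rate: "\<And>i. i \<in> U \<Longrightarrow> G i (Suc i) * (2 * real i + 1) \<le> 3 * (real i ^ 2 + 1)"
    and cont: "\<And>i. i \<in> U \<Longrightarrow> continuous_on {0..} (y i)"
    and der: "\<And>i t. i \<in> U \<Longrightarrow> 0 < t \<Longrightarrow> (y i has_real_derivative (\<Sum>l\<in>F i. G i l * y l t)) (at t within {0..t})"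
    and init: "\<And>i. i \<in> U \<Longrightarrow> y i 0 = 0"
    and bound: "\<And>T. \<exists>B. \<forall>i\<in>U. \<forall>t\<in>{0..T}. \<bar>y i t\<bar> \<le> B * (real i + 1)"
    and ii: "ii \<in> U" and tt: "0 \<le> tt"
  shows "y ii tt = 0"
proof -
  have "y ii tt \<le> 0"
    by (rule ode_nonpos[where y = y and G = G and F = F and U = U]) (use assms in auto)
  moreover have "(\<lambda>i t. - y i t) ii tt \<le> 0"
  proof (rule ode_nonpos[where y = "\<lambda>i t. - y i t" and G = G and F = F and U = U])
    show "continuous_on {0..} (\<lambda>t. - y i t)" if "i \<in> U" for i
      using cont[OF that] by (intro continuous_intros)
    show "((\<lambda>t. - y i t) has_real_derivative (\<Sum>l\<in>F i. G i l * - y l t)) (at t within {0..t})"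
      if "i \<in> U" "0 < t" for i t
    proof -
      have "((\<lambda>t. - y i t) has_real_derivative - (\<Sum>l\<in>F i. G i l * y l t)) (at t within {0..t})"
        by (rule DERIV_minus[OF der[OF that]])
      then show ?thesis by (simp add: sum_negf[symmetric])
    qed
    show "\<exists>B. \<forall>i\<in>U. \<forall>t\<in>{0..T}. \<bar>- y i t\<bar> \<le> B * (real i + 1)" for T using bound[of T] by simp
  qed (use assms in auto)
  ultimately show ?thesis by simp
qed

lemma partB:
  fixes p :: real
  assumes p: "0 < p" "p \<le> 1"
    and D: "ctmc_transition UNIV (Qgen p) P"
    and Dbar: "ctmc_transition {1..} (Qbar p) Pbar"
    and k: "1 \<le> k" and i: "1 \<le> i" and t: "0 \<le> t"
  shows "P t i k = real i / real k * exp ((2 * p - 1) * t) * Pbar t i k"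
proof -
  define R where "R i t = (if i = 0 then 0 else real i / real k * exp ((2 * p - 1) * t) * Pbar t i k)" for i t
  define y where "y i t = P t i k - R i t" for i t
  have DP: "((\<lambda>s. P s i k) has_real_derivative (\<Sum>l\<le>Suc i. Qgen p i l * P t l k)) (at t within {0..t})"
    if "0 < t" for i t
    by (rule ct_back[OF D]) (use that Qgen_rowsum in auto)
  have DPb: "((\<lambda>s. Pbar s i k) has_real_derivative (\<Sum>l\<in>{1..Suc i}. Qbar p i l * Pbar t l k)) (at t within {0..t})"
    if "0 < t" "1 \<le> i" for i t
    by (rule ct_back[OF Dbar]) (use that k Qbar_rowsum in auto)
  have DR: "(R i has_real_derivative (\<Sum>l\<le>Suc i. Qgen p i l * R l t)) (at t within {0..t})"
    if t: "0 < t" for i t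
  proof (cases "i = 0")
    case True
    have "R i = (\<lambda>_. 0)" using True by (auto simp: R_def)
    moreover have "(\<Sum>l\<le>Suc i. Qgen p i l * R l t) = 0"
      using True by (simp add: Qgen_def R_def)
    ultimately show ?thesis by simp
  next
    case False
    then have i1: "1 \<le> i" by simp
    define e where "e = exp ((2 * p - 1) * t)"
    have Ri: "R i = (\<lambda>s. real i / real k * exp ((2 * p - 1) * s) * Pbar s i k)"
      using False by (auto simp: R_def fun_eq_iff)
    have d: "(R i has_real_derivative real i / real k * ((2 * p - 1) * e * Pbar t i k
          + e * (\<Sum>l\<in>{1..Suc i}. Qbar p i l * Pbar t l k))) (at t within {0..t})"
      unfolding Ri e_def
      by (rule derivative_eq_intros DPb[OF t i1] refl)+ (simp add: algebra_simps)
    have "(\<Sum>l\<le>Suc i. Qgen p i l * R l t) = (\<Sum>l\<in>{1..Suc i}. Qgen p i l * R l t)"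
    proof -
      have "{..Suc i} = insert 0 {1..Suc i}" by auto
      then show ?thesis by (simp add: R_def)
    qed
    also have "\<dots> = (\<Sum>l\<in>{1..Suc i}. e / real k * ((Qgen p i l * real l) * Pbar t l k))"
      by (rule sum.cong) (auto simp: R_def e_def)
    also have "\<dots> = (\<Sum>l\<in>{1..Suc i}. e / real k * ((real i * Qbar p i l + (if l = i then (2 * p - 1) * real i else 0)) * Pbar t l k))"
      by (rule sum.cong) (use Qgen_Qbar i1 in auto)
    also have "\<dots> = (\<Sum>l\<in>{1..Suc i}. e / real k * (real i * (Qbar p i l * Pbar t l k))
          + (if l = i then e / real k * ((2 * p - 1) * real i * Pbar t i k) else 0))"
      by (rule sum.cong) (auto simp only: distrib_right distrib_left mult.assoc split: if_split)
    also have "\<dots> = e / real k * (real i * (\<Sum>l\<in>{1..Suc i}. Qbar p i l * Pbar t l k))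
          + e / real k * ((2 * p - 1) * real i * Pbar t i k)"
      using i1 by (simp only: sum.distrib sum.delta sum_distrib_left[symmetric]) simp
    finally have "(\<Sum>l\<le>Suc i. Qgen p i l * R l t) = real i / real k * ((2 * p - 1) * e * Pbar t i k
          + e * (\<Sum>l\<in>{1..Suc i}. Qbar p i l * Pbar t l k))"
      by (simp add: algebra_simps)
    then show ?thesis using d by simp
  qed
  have "y i t = 0"
  proof (rule ode_zero[where y = y and ii = i and tt = t and G = "Qgen p" and F = "\<lambda>i. {..Suc i}" and U = UNIV])
    show "(\<Sum>l\<in>{..Suc i}. Qgen p i l) = 0" for i by (rule Qgen_rowsum)
    show "0 \<le> Qgen p i l" if "l \<noteq> i" for i l using Qgen_nn[OF _ p(2) that] p by simp
    show "Qgen p i (Suc i) * (2 * real i + 1) \<le> 3 * (real i ^ 2 + 1)" for i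
      using Qgen_rate[OF _ p(2)] p by simp
    show "continuous_on {0..} (y i)" for i
    proof -
      have c1: "continuous_on {0..} (\<lambda>t. P t i k)" by (rule ct_cont[OF D]) auto
      have c2: "continuous_on {0..} (R i)"
      proof (cases "i = 0")
        case True then show ?thesis by (simp add: R_def)
      next
        case False
        have "continuous_on {0..} (\<lambda>t. Pbar t i k)" by (rule ct_cont[OF Dbar]) (use False k in auto)
        then have "continuous_on {0..} (\<lambda>t. real i / real k * exp ((2 * p - 1) * t) * Pbar t i k)"
          by (intro continuous_intros)
        then show ?thesis using False by (simp add: R_def)
      qed
      show ?thesis unfolding y_def using c1 c2 by (intro continuous_intros)
    qed
    show "(y i has_real_derivative (\<Sum>l\<in>{..Suc i}. Qgen p i l * y l t)) (at t within {0..t})"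
      if "0 < t" for i t
    proof -
      have "(y i has_real_derivative (\<Sum>l\<le>Suc i. Qgen p i l * P t l k) - (\<Sum>l\<le>Suc i. Qgen p i l * R l t)) (at t within {0..t})"
        unfolding y_def by (rule DERIV_diff[OF DP[OF that] DR[OF that]])
      then show ?thesis unfolding y_def by (simp add: right_diff_distrib sum_subtractf)
    qed
    show "y i 0 = 0" for i
      using ct_init[OF D, of i k] ct_init[OF Dbar, of i k] k by (auto simp: y_def R_def)
    show "\<exists>B. \<forall>i\<in>UNIV. \<forall>t\<in>{0..T}. \<bar>y i t\<bar> \<le> B * (real i + 1)" for T
    proof (intro exI[of _ "1 + exp T"] ballI)
      fix i :: nat and t assume t: "t \<in> {0..T}"
      have P1: "\<bar>P t i k\<bar> \<le> 1" using ct_nonneg[OF D, of t i k] ct_le1[OF D, of t i k] t by auto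
      have R1: "\<bar>R i t\<bar> \<le> real i * exp T"
      proof (cases "i = 0")
        case True then show ?thesis by (simp add: R_def)
      next
        case False
        have Pb: "0 \<le> Pbar t i k" "Pbar t i k \<le> 1"
          using ct_nonneg[OF Dbar, of t i k] ct_le1[OF Dbar, of t i k] t False k by auto
        have ek: "real i / real k \<le> real i"
        proof -
          have "real i * 1 \<le> real i * real k" using k by (intro mult_left_mono) auto
          then show ?thesis using k by (simp add: divide_le_eq)
        qed
        have ee: "exp ((2 * p - 1) * t) \<le> exp T"
        proof -
          have "(2 * p - 1) * t \<le> 1 * t" using p t by (intro mult_right_mono) auto
          then show ?thesis using t by simp
        qed
        have "\<bar>R i t\<bar> = real i / real k * exp ((2 * p - 1) * t) * Pbar t i k"
          using False Pb by (simp add: R_def)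
        also have "\<dots> \<le> real i * exp T * 1"
          using Pb ek ee by (intro mult_mono) auto
        finally show ?thesis by simp
      qed
      have "\<bar>y i t\<bar> \<le> 1 + real i * exp T" using P1 R1 unfolding y_def by linarith
      also have "\<dots> \<le> (1 + exp T) * (real i + 1)" by (simp add: algebra_simps)
      finally show "\<bar>y i t\<bar> \<le> (1 + exp T) * (real i + 1)" .
    qed
  qed (use t in auto)
  then show ?thesis using i by (simp add: y_def R_def)
qed

lemma has_sum_diff':
  fixes f g :: "'a \<Rightarrow> real"
  assumes "(f has_sum a) A" "(g has_sum b) A"
  shows "((\<lambda>x. f x - g x) has_sum (a - b)) A"
proof -
  have "((\<lambda>x. - g x) has_sum - b) A" using assms(2) by (simp add: has_sum_uminus)
  from has_sum_add[OF assms(1) this] show ?thesis by simp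
qed

lemma contract:
  fixes M :: "nat \<Rightarrow> nat \<Rightarrow> real" and w :: "nat \<Rightarrow> real" and S :: "nat set"
  assumes Mnn: "\<And>l k. l\<in>S \<Longrightarrow> k\<in>S \<Longrightarrow> 0 \<le> M l k"
    and Mrow: "\<And>l. l\<in>S \<Longrightarrow> (M l has_sum 1) S"
    and w: "w summable_on S"
  shows contract_col: "\<And>k. k\<in>S \<Longrightarrow> (\<lambda>l. w l * M l k) summable_on S"
    and contract_summ: "(\<lambda>k. \<Sum>\<^sub>\<infinity>l\<in>S. w l * M l k) summable_on S"
    and contract_le: "(\<Sum>\<^sub>\<infinity>k\<in>S. \<bar>\<Sum>\<^sub>\<infinity>l\<in>S. w l * M l k\<bar>) \<le> (\<Sum>\<^sub>\<infinity>l\<in>S. \<bar>w l\<bar>)"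
    and contract_sum: "(\<Sum>\<^sub>\<infinity>k\<in>S. \<Sum>\<^sub>\<infinity>l\<in>S. w l * M l k) = (\<Sum>\<^sub>\<infinity>l\<in>S. w l)"
proof -
  have wa: "(\<lambda>l. \<bar>w l\<bar>) summable_on S"
    using summable_on_iff_abs_summable_on_real[of w S] w by simp
  have rowa: "((\<lambda>k. \<bar>w l\<bar> * M l k) has_sum \<bar>w l\<bar>) S" if "l \<in> S" for l
    using has_sum_cmult_right[OF Mrow[OF that], of "\<bar>w l\<bar>"] by simp
  have absS: "(\<lambda>(l, k). \<bar>w l\<bar> * M l k) summable_on (S \<times> S)"
  proof (rule summable_on_SigmaI[where g = "\<lambda>l. \<bar>w l\<bar>"])
    show "((\<lambda>y. case (x, y) of (l, k) \<Rightarrow> \<bar>w l\<bar> * M l k) has_sum \<bar>w x\<bar>) S" if "x \<in> S" for x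
      using rowa[OF that] by simp
    show "(\<lambda>l. \<bar>w l\<bar>) summable_on S" by (rule wa)
    show "0 \<le> (case (x, y) of (l, k) \<Rightarrow> \<bar>w l\<bar> * M l k)" if "x \<in> S" "y \<in> S" for x y
      using Mnn[OF that] by simp
  qed
  have fS: "(\<lambda>(l, k). w l * M l k) summable_on (S \<times> S)"
  proof -
    have "(\<lambda>x. norm (case x of (l, k) \<Rightarrow> w l * M l k)) summable_on (S \<times> S)"
    proof (rule summable_on_cong[THEN iffD1, OF _ absS])
      fix x assume "x \<in> S \<times> S"
      then show "(case x of (l, k) \<Rightarrow> \<bar>w l\<bar> * M l k) = norm (case x of (l, k) \<Rightarrow> w l * M l k)"
        using Mnn by (auto simp: abs_mult)
    qed
    then show ?thesis by (rule abs_summable_summable)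
  qed
  have fS': "(\<lambda>(k, l). w l * M l k) summable_on (S \<times> S)"
    using fS summable_on_swap[of "\<lambda>(l, k). w l * M l k" S S] by simp
  have absS': "(\<lambda>(k, l). \<bar>w l\<bar> * M l k) summable_on (S \<times> S)"
    using absS summable_on_swap[of "\<lambda>(l, k). \<bar>w l\<bar> * M l k" S S] by simp
  show col: "(\<lambda>l. w l * M l k) summable_on S" if "k \<in> S" for k
    using summable_on_SigmaD1[of "\<lambda>k l. w l * M l k" S "\<lambda>_. S" k] fS' that by simp
  have cola: "(\<lambda>l. \<bar>w l\<bar> * M l k) summable_on S" if "k \<in> S" for k
    using summable_on_SigmaD1[of "\<lambda>k l. \<bar>w l\<bar> * M l k" S "\<lambda>_. S" k] absS' that by simp
  show "(\<lambda>k. \<Sum>\<^sub>\<infinity>l\<in>S. w l * M l k) summable_on S"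
    using summable_on_Sigma_banach[of "\<lambda>k l. w l * M l k" S "\<lambda>_. S"] fS' by simp
  have ga: "(\<lambda>k. \<Sum>\<^sub>\<infinity>l\<in>S. \<bar>w l\<bar> * M l k) summable_on S"
    using summable_on_Sigma_banach[of "\<lambda>k l. \<bar>w l\<bar> * M l k" S "\<lambda>_. S"] absS' by simp
  have "(\<Sum>\<^sub>\<infinity>k\<in>S. \<bar>\<Sum>\<^sub>\<infinity>l\<in>S. w l * M l k\<bar>) \<le> (\<Sum>\<^sub>\<infinity>k\<in>S. \<Sum>\<^sub>\<infinity>l\<in>S. \<bar>w l\<bar> * M l k)"
  proof (rule infsum_mono)
    show "(\<lambda>k. \<bar>\<Sum>\<^sub>\<infinity>l\<in>S. w l * M l k\<bar>) summable_on S"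
    proof (rule summable_on_comparison_test[OF ga])
      fix k assume k: "k \<in> S"
      have "norm (\<Sum>\<^sub>\<infinity>l\<in>S. w l * M l k) \<le> (\<Sum>\<^sub>\<infinity>l\<in>S. norm (w l * M l k))"
        by (rule norm_infsum_bound) (use summable_on_iff_abs_summable_on_real[of "\<lambda>l. w l * M l k" S] col[OF k] in simp)
      also have "\<dots> = (\<Sum>\<^sub>\<infinity>l\<in>S. \<bar>w l\<bar> * M l k)"
        by (rule infsum_cong) (use Mnn k in \<open>auto simp: abs_mult\<close>)
      finally show "\<bar>\<Sum>\<^sub>\<infinity>l\<in>S. w l * M l k\<bar> \<le> (\<Sum>\<^sub>\<infinity>l\<in>S. \<bar>w l\<bar> * M l k)" by simp
    qed simp
    show "(\<lambda>k. \<Sum>\<^sub>\<infinity>l\<in>S. \<bar>w l\<bar> * M l k) summable_on S" by (rule ga)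
    fix k assume k: "k \<in> S"
    have "norm (\<Sum>\<^sub>\<infinity>l\<in>S. w l * M l k) \<le> (\<Sum>\<^sub>\<infinity>l\<in>S. norm (w l * M l k))"
      by (rule norm_infsum_bound) (use summable_on_iff_abs_summable_on_real[of "\<lambda>l. w l * M l k" S] col[OF k] in simp)
    also have "\<dots> = (\<Sum>\<^sub>\<infinity>l\<in>S. \<bar>w l\<bar> * M l k)"
      by (rule infsum_cong) (use Mnn k in \<open>auto simp: abs_mult\<close>)
    finally show "\<bar>\<Sum>\<^sub>\<infinity>l\<in>S. w l * M l k\<bar> \<le> (\<Sum>\<^sub>\<infinity>l\<in>S. \<bar>w l\<bar> * M l k)" by simp
  qed
  also have "\<dots> = (\<Sum>\<^sub>\<infinity>l\<in>S. \<Sum>\<^sub>\<infinity>k\<in>S. \<bar>w l\<bar> * M l k)"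
    using infsum_swap_banach[of "\<lambda>k l. \<bar>w l\<bar> * M l k" S S] absS' by simp
  also have "\<dots> = (\<Sum>\<^sub>\<infinity>l\<in>S. \<bar>w l\<bar>)"
  proof (rule infsum_cong)
    fix l assume l: "l \<in> S"
    show "(\<Sum>\<^sub>\<infinity>k\<in>S. \<bar>w l\<bar> * M l k) = \<bar>w l\<bar>" by (rule infsumI[OF rowa[OF l]])
  qed
  finally show "(\<Sum>\<^sub>\<infinity>k\<in>S. \<bar>\<Sum>\<^sub>\<infinity>l\<in>S. w l * M l k\<bar>) \<le> (\<Sum>\<^sub>\<infinity>l\<in>S. \<bar>w l\<bar>)" .
  have "(\<Sum>\<^sub>\<infinity>k\<in>S. \<Sum>\<^sub>\<infinity>l\<in>S. w l * M l k) = (\<Sum>\<^sub>\<infinity>l\<in>S. \<Sum>\<^sub>\<infinity>k\<in>S. w l * M l k)"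
    using infsum_swap_banach[of "\<lambda>k l. w l * M l k" S S] fS' by simp
  also have "\<dots> = (\<Sum>\<^sub>\<infinity>l\<in>S. w l)"
  proof (rule infsum_cong)
    fix l assume l: "l \<in> S"
    show "(\<Sum>\<^sub>\<infinity>k\<in>S. w l * M l k) = w l"
      using infsumI[OF has_sum_cmult_right[OF Mrow[OF l], of "w l"]] by simp
  qed
  finally show "(\<Sum>\<^sub>\<infinity>k\<in>S. \<Sum>\<^sub>\<infinity>l\<in>S. w l * M l k) = (\<Sum>\<^sub>\<infinity>l\<in>S. w l)" .
qed

lemma contract_strict:
  fixes M :: "nat \<Rightarrow> nat \<Rightarrow> real" and w :: "nat \<Rightarrow> real" and S :: "nat set"
  assumes Mnn: "\<And>l k. l\<in>S \<Longrightarrow> k\<in>S \<Longrightarrow> 0 \<le> M l k"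
    and Mrow: "\<And>l. l\<in>S \<Longrightarrow> (M l has_sum 1) S"
    and w: "w summable_on S"
    and k1: "k1 \<in> S" and Mpos: "\<And>l. l \<in> S \<Longrightarrow> 0 < M l k1"
    and nz: "l0 \<in> S" "w l0 \<noteq> 0" and s0: "infsum w S = 0"
  shows "(\<Sum>\<^sub>\<infinity>k\<in>S. \<bar>\<Sum>\<^sub>\<infinity>l\<in>S. w l * M l k\<bar>) < (\<Sum>\<^sub>\<infinity>l\<in>S. \<bar>w l\<bar>)"
proof -
  define v where "v k = (\<Sum>\<^sub>\<infinity>l\<in>S. w l * M l k)" for k
  define g where "g k = (\<Sum>\<^sub>\<infinity>l\<in>S. \<bar>w l\<bar> * M l k)" for k
  have wa: "(\<lambda>l. \<bar>w l\<bar>) summable_on S"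
    using summable_on_iff_abs_summable_on_real[of w S] w by simp
  have colw: "(\<lambda>l. w l * M l k) summable_on S" if "k \<in> S" for k
    by (rule contract_col[OF Mnn Mrow w that])
  have cola: "(\<lambda>l. \<bar>w l\<bar> * M l k) summable_on S" if "k \<in> S" for k
    by (rule contract_col[OF Mnn Mrow wa that])
  have gs: "g summable_on S" unfolding g_def by (rule contract_summ[OF Mnn Mrow wa])
  have gsum: "infsum g S = (\<Sum>\<^sub>\<infinity>l\<in>S. \<bar>w l\<bar>)"
    unfolding g_def using contract_sum[OF Mnn Mrow wa] by simp
  have vs: "v summable_on S" unfolding v_def by (rule contract_summ[OF Mnn Mrow w])
  have vas: "(\<lambda>k. \<bar>v k\<bar>) summable_on S"
    using summable_on_iff_abs_summable_on_real[of v S] vs by simp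
  have vg: "\<bar>v k\<bar> \<le> g k" if k: "k \<in> S" for k
  proof -
    have "norm (\<Sum>\<^sub>\<infinity>l\<in>S. w l * M l k) \<le> (\<Sum>\<^sub>\<infinity>l\<in>S. norm (w l * M l k))"
      by (rule norm_infsum_bound) (use summable_on_iff_abs_summable_on_real[of "\<lambda>l. w l * M l k" S] colw[OF k] in simp)
    also have "\<dots> = g k" unfolding g_def
      by (rule infsum_cong) (use Mnn k in \<open>auto simp: abs_mult\<close>)
    finally show ?thesis unfolding v_def by simp
  qed
  have ab: "\<exists>a\<in>S. w a > 0" "\<exists>b\<in>S. w b < 0"
  proof -
    show "\<exists>a\<in>S. w a > 0"
    proof (rule ccontr)
      assume "\<not> (\<exists>a\<in>S. w a > 0)"
      then have "\<forall>x\<in>S. w x \<le> 0" by (simp add: not_less)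
      then have nn: "\<And>x. x \<in> S \<Longrightarrow> (\<lambda>l. - w l) x \<ge> 0" by simp
      have "infsum (\<lambda>l. - w l) S \<le> 0" using s0 infsum_uminus[of w S] by simp
      moreover have "(\<lambda>l. - w l) summable_on S" using w summable_on_uminus by blast
      ultimately have "(\<lambda>l. - w l) l0 = 0" using nonneg_infsum_le_0D[of "\<lambda>l. - w l" S l0] nn nz(1) by simp
      then show False using nz(2) by simp
    qed
    show "\<exists>b\<in>S. w b < 0"
    proof (rule ccontr)
      assume "\<not> (\<exists>b\<in>S. w b < 0)"
      then have "\<forall>x\<in>S. w x \<ge> 0" by (simp add: not_less)
      then have nn: "\<And>x. x \<in> S \<Longrightarrow> w x \<ge> 0" by simp
      have "w l0 = 0" using nonneg_infsum_le_0D[of w S l0] s0 w nn nz(1) by simp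
      then show False using nz(2) by simp
    qed
  qed
  then obtain a b where a: "a \<in> S" "w a > 0" and b: "b \<in> S" "w b < 0" by blast
  have strict1: "\<bar>v k1\<bar> < g k1"
  proof -
    have h1: "((\<lambda>l. \<bar>w l\<bar> * M l k1 - w l * M l k1) has_sum (g k1 - v k1)) S"
      unfolding g_def v_def by (rule has_sum_diff') (use cola[OF k1] colw[OF k1] in auto)
    have h2: "((\<lambda>l. \<bar>w l\<bar> * M l k1 + w l * M l k1) has_sum (g k1 + v k1)) S"
      unfolding g_def v_def by (rule has_sum_add) (use cola[OF k1] colw[OF k1] in auto)
    have p1: "0 \<le> \<bar>w x\<bar> * M x k1 - w x * M x k1" if "x \<in> S" for x
    proof -
      have "0 \<le> (\<bar>w x\<bar> - w x) * M x k1" by (intro mult_nonneg_nonneg) (use Mnn that k1 in auto)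
      then show ?thesis by (simp add: left_diff_distrib)
    qed
    have p2: "0 \<le> \<bar>w x\<bar> * M x k1 + w x * M x k1" if "x \<in> S" for x
    proof -
      have "0 \<le> (\<bar>w x\<bar> + w x) * M x k1" by (intro mult_nonneg_nonneg) (use Mnn that k1 in auto)
      then show ?thesis by (simp add: distrib_right)
    qed
    have "sum (\<lambda>l. \<bar>w l\<bar> * M l k1 - w l * M l k1) {b} \<le> g k1 - v k1"
      by (rule finite_sum_le_has_sum[OF h1]) (use b p1 in auto)
    moreover have "sum (\<lambda>l. \<bar>w l\<bar> * M l k1 - w l * M l k1) {b} > 0"
      using b Mpos[OF b(1)] by (simp add: algebra_simps mult_neg_pos)
    moreover have "sum (\<lambda>l. \<bar>w l\<bar> * M l k1 + w l * M l k1) {a} \<le> g k1 + v k1"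
      by (rule finite_sum_le_has_sum[OF h2]) (use a p2 in auto)
    moreover have "sum (\<lambda>l. \<bar>w l\<bar> * M l k1 + w l * M l k1) {a} > 0"
      using a Mpos[OF a(1)] by simp
    ultimately show ?thesis by linarith
  qed
  have k1S: "{k1} \<subseteq> S" using k1 by simp
  have hv: "((\<lambda>k. \<bar>v k\<bar>) has_sum (infsum (\<lambda>k. \<bar>v k\<bar>) S - \<bar>v k1\<bar>)) (S - {k1})"
    using has_sum_diff_finite[OF has_sum_infsum[OF vas] _ k1S] by simp
  have hg: "(g has_sum (infsum g S - g k1)) (S - {k1})"
    using has_sum_diff_finite[OF has_sum_infsum[OF gs] _ k1S] by simp
  have "infsum (\<lambda>k. \<bar>v k\<bar>) S - \<bar>v k1\<bar> \<le> infsum g S - g k1"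
    by (rule has_sum_mono[OF hv hg]) (use vg in auto)
  then have "infsum (\<lambda>k. \<bar>v k\<bar>) S < infsum g S" using strict1 by linarith
  then show ?thesis unfolding gsum[symmetric] v_def by simp
qed

lemma ct_pos_diag:
  assumes C: "ctmc_transition S G P" and i: "i \<in> S" and t: "0 \<le> t"
  shows "P t i i > 0"
proof -
  have P0: "P 0 i i = 1" using ct_init[OF C i i] by simp
  obtain d where d: "d > 0" "\<forall>x'\<in>{0..}. dist x' 0 < d \<longrightarrow> dist (P x' i i) (P 0 i i) < 1/2"
    using ct_cont0[OF C i i] unfolding continuous_within_eps_delta
    by (metis divide_pos_pos zero_less_numeral zero_less_one)
  have half: "P h i i > 1/2" if "0 \<le> h" "h < d" for h
  proof -
    have "\<bar>P h i i - 1\<bar> < 1/2" using d(2)[rule_format, of h] that P0 by (auto simp: dist_real_def)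
    then show ?thesis by linarith
  qed
  have pow: "P (real n * h) i i \<ge> (P h i i) ^ n" if h: "0 \<le> h" for n h
  proof (induction n)
    case 0 then show ?case using P0 by simp
  next
    case (Suc n)
    have "(P h i i) ^ Suc n = (P h i i) ^ n * P h i i" by (simp add: mult.commute)
    also have "\<dots> \<le> P (real n * h) i i * P h i i"
      using Suc ct_nonneg[OF C h i i] by (intro mult_right_mono) auto
    also have "\<dots> \<le> P (real n * h + h) i i" by (rule ct_CK_ge[OF C _ h i i i]) (use h in auto)
    also have "real n * h + h = real (Suc n) * h" by (simp add: algebra_simps)
    finally show ?case .
  qed
  define n where "n = nat \<lceil>t / d\<rceil> + 1"
  have n: "real n > t / d" "n \<ge> 1" unfolding n_def by linarith+
  define h where "h = t / real n"
  have h: "0 \<le> h" "h < d"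
  proof -
    show "0 \<le> h" unfolding h_def using t by simp
    have "t < real n * d" using n(1) d(1) by (simp add: field_simps)
    then show "h < d" unfolding h_def using n(2) by (simp add: field_simps)
  qed
  have "real n * h = t" unfolding h_def using n(2) by simp
  then have "P t i i \<ge> (P h i i) ^ n" using pow[OF h(1), of n] by simp
  moreover have "(P h i i) ^ n > 0" using half[OF h] by simp
  ultimately show ?thesis by linarith
qed

lemma ct_pos_edge:
  assumes C: "ctmc_transition S G P" and a: "a \<in> S" and b: "b \<in> S" and ab: "a \<noteq> b"
    and G: "G a b > 0" and t: "0 < t"
  shows "P t a b > 0"
proof -
  obtain d where d: "d > 0" "\<forall>h>0. 0 + h \<in> {0..} \<longrightarrow> h < d \<longrightarrow> P 0 a b < P (0 + h) a b"
    using has_real_derivative_pos_inc_right[OF ct_deriv[OF C a b] G] by blast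
  define h where "h = min d t / 2"
  have h: "0 < h" "h < d" "h < t" unfolding h_def using d(1) t by auto
  have Pab: "P h a b > 0" using d(2)[rule_format, of h] h ct_init[OF C a b] ab by simp
  have "P h a b * P (t - h) b b \<le> P (h + (t - h)) a b"
    by (rule ct_CK_ge[OF C _ _ a b b]) (use h in auto)
  moreover have "P h a b * P (t - h) b b > 0"
    using Pab ct_pos_diag[OF C b, of "t - h"] h by simp
  ultimately show ?thesis by simp
qed

lemma ct_pos_trans:
  assumes C: "ctmc_transition S G P" and abc: "a \<in> S" "b \<in> S" "c \<in> S"
    and ab: "\<And>t. 0 < t \<Longrightarrow> P t a b > 0" and bc: "\<And>t. 0 < t \<Longrightarrow> P t b c > 0" and t: "0 < t"
  shows "P t a c > 0"
proof -
  have "P (t/2) a b * P (t/2) b c \<le> P (t/2 + t/2) a c"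
    by (rule ct_CK_ge[OF C _ _ abc]) (use t in auto)
  moreover have "P (t/2) a b * P (t/2) b c > 0" using ab bc t by simp
  ultimately show ?thesis by simp
qed

lemma Pbar_pos:
  fixes p :: real
  assumes p: "0 < p" "p < 1" and Dbar: "ctmc_transition {1..} (Qbar p) Pbar"
    and i: "1 \<le> i" and j: "1 \<le> j" and t: "0 < t"
  shows "Pbar t i j > 0"
proof -
  have to1: "Pbar t i 1 > 0" if "1 \<le> i" "0 < t" for i t
  proof (cases "i = 1")
    case True then show ?thesis using ct_pos_diag[OF Dbar, of 1 t] that by simp
  next
    case False
    have "Qbar p i 1 > 0" using False that p by (simp add: Qbar_def)
    then show ?thesis using ct_pos_edge[OF Dbar, of i 1 t] that False by simp
  qed
  have from1: "Pbar t 1 j > 0" if "1 \<le> j" "0 < t" for j t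
    using that
  proof (induction j arbitrary: t rule: nat_induct_at_least)
    case base then show ?case using ct_pos_diag[OF Dbar, of 1 t] by simp
  next
    case (Suc j)
    have e: "Pbar s j (Suc j) > 0" if "0 < s" for s
      using ct_pos_edge[OF Dbar, of j "Suc j" s] that Suc.hyps p by (simp add: Qbar_def)
    show ?case
      by (rule ct_pos_trans[OF Dbar, of 1 j "Suc j"]) (use Suc e in auto)
  qed
  show ?thesis
    by (rule ct_pos_trans[OF Dbar, of i 1 j]) (use i j t to1 from1 in auto)
qed

lemma infsum_diff':
  fixes a b :: "nat \<Rightarrow> real"
  assumes "a summable_on S" "b summable_on S"
  shows "(\<lambda>k. a k - b k) summable_on S" "infsum (\<lambda>k. a k - b k) S = infsum a S - infsum b S"
proof -
  have h: "((\<lambda>k. a k - b k) has_sum (infsum a S - infsum b S)) S"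
    by (rule has_sum_diff') (use assms in \<open>auto simp: has_sum_infsum\<close>)
  then show "(\<lambda>k. a k - b k) summable_on S" using has_sum_imp_summable by blast
  show "infsum (\<lambda>k. a k - b k) S = infsum a S - infsum b S" using h infsumI by blast
qed

lemma abs_summable_real: fixes a :: "nat \<Rightarrow> real" shows "a summable_on S \<Longrightarrow> (\<lambda>k. \<bar>a k\<bar>) summable_on S"
  using summable_on_iff_abs_summable_on_real[of a S] by simp

lemma infsum_diff_bound:
  fixes a b :: "nat \<Rightarrow> real"
  assumes "a summable_on S" "b summable_on S"
  shows "\<bar>infsum a S - infsum b S\<bar> \<le> infsum (\<lambda>k. \<bar>a k - b k\<bar>) S"
proof -
  have s: "(\<lambda>k. a k - b k) summable_on S" using infsum_diff'[OF assms] by simp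
  have "norm (infsum (\<lambda>k. a k - b k) S) \<le> infsum (\<lambda>k. norm (a k - b k)) S"
    by (rule norm_infsum_bound) (use abs_summable_real[OF s] in simp)
  then show ?thesis using infsum_diff'(2)[OF assms] by simp
qed

lemma infsum_abs_diff_bound:
  fixes a b :: "nat \<Rightarrow> real"
  assumes a: "a summable_on S" and b: "b summable_on S"
  shows "\<bar>infsum (\<lambda>k. \<bar>a k\<bar>) S - infsum (\<lambda>k. \<bar>b k\<bar>) S\<bar> \<le> infsum (\<lambda>k. \<bar>a k - b k\<bar>) S"
proof -
  have aa: "(\<lambda>k. \<bar>a k\<bar>) summable_on S" by (rule abs_summable_real[OF a])
  have ba: "(\<lambda>k. \<bar>b k\<bar>) summable_on S" by (rule abs_summable_real[OF b])
  have d: "(\<lambda>k. \<bar>a k - b k\<bar>) summable_on S"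
    by (rule abs_summable_real) (use infsum_diff'[OF a b] in simp)
  have "infsum (\<lambda>k. \<bar>a k\<bar>) S \<le> infsum (\<lambda>k. \<bar>a k - b k\<bar> + \<bar>b k\<bar>) S"
    by (rule infsum_mono) (use aa ba d in \<open>auto intro: summable_on_add\<close>)
  also have "\<dots> = infsum (\<lambda>k. \<bar>a k - b k\<bar>) S + infsum (\<lambda>k. \<bar>b k\<bar>) S"
    by (rule infsum_add[OF d ba])
  finally have 1: "infsum (\<lambda>k. \<bar>a k\<bar>) S - infsum (\<lambda>k. \<bar>b k\<bar>) S \<le> infsum (\<lambda>k. \<bar>a k - b k\<bar>) S" by simp
  have "infsum (\<lambda>k. \<bar>b k\<bar>) S \<le> infsum (\<lambda>k. \<bar>a k - b k\<bar> + \<bar>a k\<bar>) S"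
    by (rule infsum_mono) (use aa ba d in \<open>auto intro: summable_on_add\<close>)
  also have "\<dots> = infsum (\<lambda>k. \<bar>a k - b k\<bar>) S + infsum (\<lambda>k. \<bar>a k\<bar>) S"
    by (rule infsum_add[OF d aa])
  finally have 2: "infsum (\<lambda>k. \<bar>b k\<bar>) S - infsum (\<lambda>k. \<bar>a k\<bar>) S \<le> infsum (\<lambda>k. \<bar>a k - b k\<bar>) S" by simp
  show ?thesis using 1 2 by linarith
qed

lemma dom_sum_tendsto:
  fixes x :: "nat \<Rightarrow> nat \<Rightarrow> real" and g :: "nat \<Rightarrow> real"
  assumes g: "g summable_on S" and dom: "\<And>n k. k \<in> S \<Longrightarrow> \<bar>x n k\<bar> \<le> g k"
    and lim: "\<And>k. k \<in> S \<Longrightarrow> (\<lambda>n. x n k) \<longlonglongrightarrow> 0"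
  shows "(\<lambda>n. infsum (\<lambda>k. \<bar>x n k\<bar>) S) \<longlonglongrightarrow> 0"
proof (rule LIMSEQ_I)
  fix r :: real assume r: "0 < r"
  obtain K where K: "finite K" "K \<subseteq> S" "dist (sum g K) (infsum g S) \<le> r / 3"
    using infsum_finite_approximation[OF g, of "r/3"] r by auto
  have tail: "((\<lambda>k. g k) has_sum (infsum g S - sum g K)) (S - K)"
    by (rule has_sum_diff_finite[OF has_sum_infsum[OF g] K(1,2)])
  have tailr: "infsum g S - sum g K \<le> r / 3"
  proof -
    have "\<bar>sum g K - infsum g S\<bar> \<le> r / 3" using K(3) by (simp add: dist_real_def)
    then show ?thesis by linarith
  qed
  have xs: "(\<lambda>k. \<bar>x n k\<bar>) summable_on S" for n
    by (rule summable_on_comparison_test[OF g]) (use dom in auto)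
  have split: "infsum (\<lambda>k. \<bar>x n k\<bar>) S \<le> (\<Sum>k\<in>K. \<bar>x n k\<bar>) + r / 3" for n
  proof -
    have h: "((\<lambda>k. \<bar>x n k\<bar>) has_sum (infsum (\<lambda>k. \<bar>x n k\<bar>) S - (\<Sum>k\<in>K. \<bar>x n k\<bar>))) (S - K)"
      by (rule has_sum_diff_finite[OF has_sum_infsum[OF xs] K(1,2)])
    have "infsum (\<lambda>k. \<bar>x n k\<bar>) S - (\<Sum>k\<in>K. \<bar>x n k\<bar>) \<le> infsum g S - sum g K"
      by (rule has_sum_mono[OF h tail]) (use dom in auto)
    then show ?thesis using tailr by linarith
  qed
  have "(\<lambda>n. \<Sum>k\<in>K. \<bar>x n k\<bar>) \<longlonglongrightarrow> (\<Sum>k\<in>K. \<bar>0\<bar>)"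
    by (intro tendsto_sum tendsto_rabs lim) (use K in auto)
  then have lim0: "(\<lambda>n. \<Sum>k\<in>K. \<bar>x n k\<bar>) \<longlonglongrightarrow> 0" by simp
  have "\<exists>N. \<forall>n\<ge>N. norm ((\<Sum>k\<in>K. \<bar>x n k\<bar>) - 0) < r / 3"
    by (rule LIMSEQ_D[OF lim0]) (use r in simp)
  then obtain N where N: "\<forall>n\<ge>N. norm ((\<Sum>k\<in>K. \<bar>x n k\<bar>) - 0) < r / 3" by blast
  show "\<exists>no. \<forall>n\<ge>no. norm (infsum (\<lambda>k. \<bar>x n k\<bar>) S - 0) < r"
  proof (intro exI allI impI)
    fix n assume n: "N \<le> n"
    have "0 \<le> infsum (\<lambda>k. \<bar>x n k\<bar>) S" by (rule infsum_nonneg) auto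
    moreover have "(\<Sum>k\<in>K. \<bar>x n k\<bar>) < r / 3" using N n by auto
    ultimately show "norm (infsum (\<lambda>k. \<bar>x n k\<bar>) S - 0) < r" using split[of n] r by simp
  qed
qed

lemma p1_false:
  assumes Dbar: "ctmc_transition {1..} (Qbar 1) Pbar"
    and u: "stationary_distribution {1..} Pbar u"
  shows False
proof -
  have below: "Pbar t i k = 0" if k: "1 \<le> k" and ik: "k < i" and t: "0 \<le> t" for i k t
  proof (rule ode_zero[where y = "\<lambda>i t. Pbar t i k" and ii = i and tt = t and G = "Qbar 1"
        and F = "\<lambda>i. {i, Suc i}" and U = "{Suc k..}"])
    show "(\<Sum>l\<in>{i, Suc i}. Qbar 1 i l) = 0" if "i \<in> {Suc k..}" for i
      by (simp add: Qbar_def)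
    show "0 \<le> Qbar 1 i l" if "l \<noteq> i" for i l using Qbar_nn[OF _ _ that] by simp
    show "Qbar 1 i (Suc i) * (2 * real i + 1) \<le> 3 * (real i ^ 2 + 1)" for i
      using Qbar_rate[of 1 i] by simp
    show "continuous_on {0..} (\<lambda>t. Pbar t i k)" if "i \<in> {Suc k..}" for i
      by (rule ct_cont[OF Dbar]) (use that k in auto)
    show "((\<lambda>t. Pbar t i k) has_real_derivative (\<Sum>l\<in>{i, Suc i}. Qbar 1 i l * Pbar t l k)) (at t within {0..t})"
      if "i \<in> {Suc k..}" "0 < t" for i t
      by (rule ct_back[OF Dbar]) (use that k in \<open>auto simp: Qbar_def\<close>)
    show "Pbar 0 i k = 0" if "i \<in> {Suc k..}" for i using ct_init[OF Dbar, of i k] that k by auto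
    show "\<exists>B. \<forall>i\<in>{Suc k..}. \<forall>t\<in>{0..T}. \<bar>Pbar t i k\<bar> \<le> B * (real i + 1)" for T
    proof (intro exI[of _ 1] ballI)
      fix i t assume "i \<in> {Suc k..}" "t \<in> {0..T}"
      then show "\<bar>Pbar t i k\<bar> \<le> 1 * (real i + 1)"
        using ct_nonneg[OF Dbar, of t i k] ct_le1[OF Dbar, of t i k] k by auto
    qed
  qed (use ik t in auto)
  have us: "\<And>t k. 0 \<le> t \<Longrightarrow> k \<in> {1..} \<Longrightarrow> ((\<lambda>j. u j * Pbar t j k) has_sum u k) {1..}"
    and un: "\<And>k. k \<in> {1..} \<Longrightarrow> 0 \<le> u k" and u1: "(u has_sum 1) {1..}"
    using u unfolding stationary_distribution_def by auto
  have zero: "u k = 0" if "1 \<le> k" for k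
    using that
  proof (induction k rule: less_induct)
    case (less k)
    have e: "Pbar s k (Suc k) > 0" if "0 < s" for s
      using ct_pos_edge[OF Dbar, of k "Suc k" s] that less.prems by (simp add: Qbar_def)
    have kk: "Pbar 1 k k < 1"
    proof -
      have "sum (\<lambda>l. Pbar 1 k l) {k, Suc k} \<le> 1"
        by (rule finite_sum_le_has_sum[OF ct_sum[OF Dbar]]) (use less.prems ct_nonneg[OF Dbar] in auto)
      then show ?thesis using e[of 1] by simp
    qed
    have h: "((\<lambda>l. u l * Pbar 1 l k) has_sum u k) {1..}" using us[of 1 k] less.prems by simp
    have h2: "((\<lambda>l. u l * Pbar 1 l k) has_sum (u k - u k * Pbar 1 k k)) ({1..} - {k})"
      using has_sum_diff_finite[OF h, of "{k}"] less.prems by simp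
    have h3: "((\<lambda>l. u l * Pbar 1 l k) has_sum 0) ({1..} - {k})"
    proof (rule has_sum_cong[THEN iffD2, OF _ has_sum_0])
      fix l assume l: "l \<in> {1..} - {k}"
      show "u l * Pbar 1 l k = 0"
      proof (cases "l < k")
        case True then show ?thesis using less.IH[of l] l by simp
      next
        case False then have "k < l" using l by auto
        then show ?thesis using below[of k l 1] less.prems by simp
      qed
    qed simp
    have "u k - u k * Pbar 1 k k = 0" using has_sum_unique[OF h2 h3] .
    then have "u k * (1 - Pbar 1 k k) = 0" by (simp add: algebra_simps)
    then show ?case using kk by simp
  qed
  have "(u has_sum 0) {1..}"
    by (rule has_sum_cong[THEN iffD2, OF _ has_sum_0]) (use zero in auto)
  then show False using u1 has_sum_unique by fastforce
qed

lemma close_lim: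
  fixes Y X :: "nat \<Rightarrow> real"
  assumes "X \<longlonglongrightarrow> 0" "\<And>n. \<bar>Y n - y\<bar> \<le> X n"
  shows "Y \<longlonglongrightarrow> y"
proof -
  have "(\<lambda>n. \<bar>Y n - y\<bar>) \<longlonglongrightarrow> 0"
    by (rule tendsto_sandwich[of "\<lambda>_. 0" _ _ X]) (use assms in auto)
  then have "(\<lambda>n. Y n - y) \<longlonglongrightarrow> 0" by (simp add: tendsto_rabs_zero_iff)
  then show ?thesis by (simp add: LIM_zero_iff)
qed

lemma ergodic:
  fixes p :: real
  assumes p: "0 < p" "p < 1" and Dbar: "ctmc_transition {1..} (Qbar p) Pbar"
    and u: "stationary_distribution {1..} Pbar u" and j: "1 \<le> j"
  shows "((\<lambda>t. \<Sum>\<^sub>\<infinity>k\<in>{1..}. \<bar>Pbar t j k - u k\<bar>) \<longlongrightarrow> 0) at_top"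
proof -
  define S :: "nat set" where "S = {1..}"
  have us: "\<And>t k. 0 \<le> t \<Longrightarrow> k \<in> S \<Longrightarrow> ((\<lambda>j. u j * Pbar t j k) has_sum u k) S"
    and un: "\<And>k. k \<in> S \<Longrightarrow> 0 \<le> u k" and u1: "(u has_sum 1) S"
    using u unfolding stationary_distribution_def S_def by auto
  have D: "ctmc_transition S (Qbar p) Pbar" using Dbar unfolding S_def .
  have usum: "u summable_on S" using u1 has_sum_imp_summable by blast
  have uinf: "infsum u S = 1" using u1 infsumI by blast
  define d where "d t = (\<Sum>\<^sub>\<infinity>k\<in>S. \<bar>Pbar t j k - u k\<bar>)" for t
  have jS: "j \<in> S" using j unfolding S_def by simp
  have nus: "(\<lambda>k. Pbar t j k) summable_on S" if "0 \<le> t" for t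
    using ct_sum[OF D that jS] has_sum_imp_summable by blast
  have nuinf: "infsum (\<lambda>k. Pbar t j k) S = 1" if "0 \<le> t" for t
    using ct_sum[OF D that jS] infsumI by blast
  have wsum: "(\<lambda>k. Pbar t j k - u k) summable_on S" if "0 \<le> t" for t
    using infsum_diff'(1)[OF nus[OF that] usum] .
  have Mnn: "\<And>l k. l \<in> S \<Longrightarrow> k \<in> S \<Longrightarrow> 0 \<le> Pbar s l k" if "0 \<le> s" for s
    using ct_nonneg[OF D that] by blast
  have Mrow: "\<And>l. l \<in> S \<Longrightarrow> (Pbar s l has_sum 1) S" if "0 \<le> s" for s
    using ct_sum[OF D that] by blast
  have shift: "((\<lambda>l. (Pbar t j l - u l) * Pbar s l k) has_sum (Pbar (t + s) j k - u k)) S"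
    if "0 \<le> t" "0 \<le> s" "k \<in> S" for t s k
    using has_sum_diff'[OF ct_CK[OF D that(1,2) jS that(3)] us[OF that(2,3)]] by (simp add: left_diff_distrib)
  have dshift: "d (t + s) = (\<Sum>\<^sub>\<infinity>k\<in>S. \<bar>\<Sum>\<^sub>\<infinity>l\<in>S. (Pbar t j l - u l) * Pbar s l k\<bar>)"
    if "0 \<le> t" "0 \<le> s" for t s
    unfolding d_def by (rule infsum_cong) (use infsumI[OF shift[OF that]] in simp)
  have dmono: "d (t + s) \<le> d t" if "0 \<le> t" "0 \<le> s" for t s
    unfolding dshift[OF that] unfolding d_def by (rule contract_le[OF Mnn[OF that(2)] Mrow[OF that(2)] wsum[OF that(1)]])
  have dnn: "0 \<le> d t" for t unfolding d_def by (rule infsum_nonneg) simp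
  have ujpos: "u j > 0"
  proof -
    have "\<exists>l\<in>S. u l > 0"
    proof (rule ccontr)
      assume "\<not> (\<exists>l\<in>S. u l > 0)"
      then have "\<forall>l\<in>S. u l = 0" using un by force
      then have "(u has_sum 0) S" by (intro has_sum_cong[THEN iffD2, OF _ has_sum_0]) auto
      then show False using u1 has_sum_unique by fastforce
    qed
    then obtain l where l: "l \<in> S" "u l > 0" by blast
    have "sum (\<lambda>m. u m * Pbar 1 m j) {l} \<le> u j"
      by (rule finite_sum_le_has_sum[OF us[OF _ jS]]) (use l un Mnn[of 1] jS in auto)
    moreover have "Pbar 1 l j > 0" using Pbar_pos[OF p Dbar, of l j 1] l j unfolding S_def by simp
    moreover have "u l * Pbar 1 l j > 0" using l calculation(2) by simp
    ultimately show ?thesis by simp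
  qed
  have dom: "Pbar t j k \<le> u k / u j" if "0 \<le> t" "k \<in> S" for t k
  proof -
    have "sum (\<lambda>m. u m * Pbar t m k) {j} \<le> u k"
      by (rule finite_sum_le_has_sum[OF us[OF that]]) (use jS un Mnn[OF that(1)] that in auto)
    then show ?thesis using ujpos by (simp add: field_simps mult.commute)
  qed
  define a where "a n = d (real n)" for n
  have amono: "antimono_on UNIV a"
  proof (rule antimonoI)
    fix m n :: nat assume "m \<le> n"
    then have "d (real m + (real n - real m)) \<le> d (real m)" by (intro dmono) auto
    then show "a n \<le> a m" unfolding a_def by simp
  qed
  obtain c where c: "a \<longlonglongrightarrow> c" using decseq_convergent[OF amono, of 0] dnn unfolding a_def by blast
  define f where "f n k = (if k \<in> S then Pbar (real n) j k else 0)" for n k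
  have fb: "\<bar>f n k\<bar> \<le> 1" for n k
    unfolding f_def using ct_nonneg[OF D, of "real n" j k] ct_le1[OF D, of "real n" j k] jS by auto
  obtain \<sigma> where \<sigma>: "strict_mono \<sigma>" "\<forall>k. convergent (\<lambda>n. f (\<sigma> n) k)"
    using diag_conv[of f 1] fb by blast
  define \<mu> where "\<mu> k = lim (\<lambda>n. f (\<sigma> n) k)" for k
  have \<mu>lim: "(\<lambda>n. Pbar (real (\<sigma> n)) j k) \<longlonglongrightarrow> \<mu> k" if "k \<in> S" for k
  proof -
    have "convergent (\<lambda>n. f (\<sigma> n) k)" using \<sigma>(2) by blast
    then have "(\<lambda>n. f (\<sigma> n) k) \<longlonglongrightarrow> \<mu> k" unfolding \<mu>_def by (simp add: convergent_LIMSEQ_iff)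
    then show ?thesis using that unfolding f_def by simp
  qed
  define g where "g k = u k * (1 / u j)" for k
  have gs: "g summable_on S" unfolding g_def by (rule summable_on_cmult_left[OF usum])
  have \<mu>b: "0 \<le> \<mu> k \<and> \<mu> k \<le> g k" if k: "k \<in> S" for k
  proof
    show "0 \<le> \<mu> k"
      by (rule tendsto_lowerbound[OF \<mu>lim[OF k]]) (use ct_nonneg[OF D _ jS k] in auto)
    show "\<mu> k \<le> g k"
      by (rule tendsto_upperbound[OF \<mu>lim[OF k]]) (use dom[OF _ k] in \<open>auto simp: g_def\<close>)
  qed
  have \<mu>s: "\<mu> summable_on S" by (rule summable_on_comparison_test[OF gs]) (use \<mu>b in auto)
  define x where "x n k = Pbar (real (\<sigma> n)) j k - \<mu> k" for n k
  have xs: "(\<lambda>k. x n k) summable_on S" for n unfolding x_def by (rule infsum_diff'(1)[OF nus \<mu>s]) simp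
  have xb: "\<bar>x n k\<bar> \<le> g k" if "k \<in> S" for n k
    using \<mu>b[OF that] dom[of "real (\<sigma> n)" k] ct_nonneg[OF D, of "real (\<sigma> n)" j k] that jS
    unfolding x_def g_def by auto
  have L1: "(\<lambda>n. infsum (\<lambda>k. \<bar>x n k\<bar>) S) \<longlonglongrightarrow> 0"
  proof (rule dom_sum_tendsto[OF gs xb])
    fix k assume k: "k \<in> S"
    show "(\<lambda>n. x n k) \<longlonglongrightarrow> 0" unfolding x_def using tendsto_diff[OF \<mu>lim[OF k] tendsto_const[of "\<mu> k"]] by simp
  qed
  define ws where "ws k = \<mu> k - u k" for k
  have wss: "ws summable_on S" unfolding ws_def by (rule infsum_diff'(1)[OF \<mu>s usum])
  have \<mu>1: "infsum \<mu> S = 1"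
  proof -
    have A: "\<bar>infsum (\<lambda>k. Pbar (real (\<sigma> n)) j k) S - infsum \<mu> S\<bar> \<le> infsum (\<lambda>k. \<bar>x n k\<bar>) S" for n
      unfolding x_def by (rule infsum_diff_bound[OF nus \<mu>s]) simp
    have "\<bar>1 - infsum \<mu> S\<bar> \<le> infsum (\<lambda>k. \<bar>x n k\<bar>) S" for n using A[of n] nuinf[of "real (\<sigma> n)"] by simp
    then have "\<bar>1 - infsum \<mu> S\<bar> \<le> 0" by (intro LIMSEQ_le_const[OF L1]) auto
    then show ?thesis by simp
  qed
  have ws0: "infsum ws S = 0" unfolding ws_def using infsum_diff'(2)[OF \<mu>s usum] \<mu>1 uinf by simp
  have c1: "c = infsum (\<lambda>k. \<bar>ws k\<bar>) S"
  proof -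
    have "(\<lambda>n. a (\<sigma> n)) \<longlonglongrightarrow> c" using LIMSEQ_subseq_LIMSEQ[OF c \<sigma>(1)] by (simp add: o_def)
    moreover have "(\<lambda>n. a (\<sigma> n)) \<longlonglongrightarrow> infsum (\<lambda>k. \<bar>ws k\<bar>) S"
    proof (rule close_lim[OF L1])
      fix n
      have "\<bar>infsum (\<lambda>k. \<bar>Pbar (real (\<sigma> n)) j k - u k\<bar>) S - infsum (\<lambda>k. \<bar>ws k\<bar>) S\<bar>
          \<le> infsum (\<lambda>k. \<bar>(Pbar (real (\<sigma> n)) j k - u k) - ws k\<bar>) S"
        by (rule infsum_abs_diff_bound[OF wsum wss]) simp
      also have "\<dots> = infsum (\<lambda>k. \<bar>x n k\<bar>) S" unfolding x_def ws_def by simp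
      finally show "\<bar>a (\<sigma> n) - infsum (\<lambda>k. \<bar>ws k\<bar>) S\<bar> \<le> infsum (\<lambda>k. \<bar>x n k\<bar>) S"
        unfolding a_def d_def .
    qed
    ultimately show ?thesis using LIMSEQ_unique by blast
  qed
  define Vs where "Vs k = (\<Sum>\<^sub>\<infinity>l\<in>S. ws l * Pbar 1 l k)" for k
  have Vss: "Vs summable_on S" unfolding Vs_def by (rule contract_summ[OF Mnn[of 1] Mrow[of 1] wss]) auto
  have c2: "c = infsum (\<lambda>k. \<bar>Vs k\<bar>) S"
  proof -
    have sm: "strict_mono (\<lambda>n. \<sigma> n + 1)" using \<sigma>(1) by (simp add: strict_mono_def)
    have "(\<lambda>n. a (\<sigma> n + 1)) \<longlonglongrightarrow> c" using LIMSEQ_subseq_LIMSEQ[OF c sm] by (simp add: o_def)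
    moreover have "(\<lambda>n. a (\<sigma> n + 1)) \<longlonglongrightarrow> infsum (\<lambda>k. \<bar>Vs k\<bar>) S"
    proof (rule close_lim[OF L1])
      fix n
      define V where "V k = (\<Sum>\<^sub>\<infinity>l\<in>S. (Pbar (real (\<sigma> n)) j l - u l) * Pbar 1 l k)" for k
      have Vsum: "V summable_on S" unfolding V_def by (rule contract_summ[OF Mnn[of 1] Mrow[of 1] wsum]) auto
      have aV: "a (\<sigma> n + 1) = infsum (\<lambda>k. \<bar>V k\<bar>) S"
        unfolding a_def V_def using dshift[of "real (\<sigma> n)" 1] by (simp add: add.commute)
      have diff: "V k - Vs k = (\<Sum>\<^sub>\<infinity>l\<in>S. x n l * Pbar 1 l k)" if k: "k \<in> S" for k
      proof -
        have c1: "(\<lambda>l. (Pbar (real (\<sigma> n)) j l - u l) * Pbar 1 l k) summable_on S"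
          by (rule contract_col[OF Mnn[of 1] Mrow[of 1] wsum k]) auto
        have c2: "(\<lambda>l. ws l * Pbar 1 l k) summable_on S"
          by (rule contract_col[OF Mnn[of 1] Mrow[of 1] wss k]) auto
        have "V k - Vs k = (\<Sum>\<^sub>\<infinity>l\<in>S. (Pbar (real (\<sigma> n)) j l - u l) * Pbar 1 l k - ws l * Pbar 1 l k)"
          unfolding V_def Vs_def using infsum_diff'(2)[OF c1 c2] by simp
        also have "\<dots> = (\<Sum>\<^sub>\<infinity>l\<in>S. x n l * Pbar 1 l k)"
          by (rule infsum_cong) (simp add: x_def ws_def algebra_simps)
        finally show ?thesis .
      qed
      have "\<bar>a (\<sigma> n + 1) - infsum (\<lambda>k. \<bar>Vs k\<bar>) S\<bar> \<le> infsum (\<lambda>k. \<bar>V k - Vs k\<bar>) S"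
        unfolding aV by (rule infsum_abs_diff_bound[OF Vsum Vss])
      also have "\<dots> = infsum (\<lambda>k. \<bar>\<Sum>\<^sub>\<infinity>l\<in>S. x n l * Pbar 1 l k\<bar>) S"
        by (rule infsum_cong) (simp add: diff)
      also have "\<dots> \<le> infsum (\<lambda>l. \<bar>x n l\<bar>) S"
        by (rule contract_le[OF Mnn[of 1] Mrow[of 1] xs]) auto
      finally show "\<bar>a (\<sigma> n + 1) - infsum (\<lambda>k. \<bar>Vs k\<bar>) S\<bar> \<le> infsum (\<lambda>k. \<bar>x n k\<bar>) S" .
    qed
    ultimately show ?thesis using LIMSEQ_unique by blast
  qed
  have wz: "ws l = 0" if l: "l \<in> S" for l
  proof (rule ccontr)
    assume nz: "ws l \<noteq> 0"
    have "infsum (\<lambda>k. \<bar>Vs k\<bar>) S < infsum (\<lambda>k. \<bar>ws k\<bar>) S"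
      unfolding Vs_def
    proof (rule contract_strict[OF Mnn[of 1] Mrow[of 1] wss _ _ l nz ws0])
      show "1 \<in> S" unfolding S_def by simp
      show "0 < Pbar 1 l' 1" if "l' \<in> S" for l'
        using Pbar_pos[OF p Dbar, of l' 1 1] that unfolding S_def by simp
    qed auto
    then show False using c1 c2 by simp
  qed
  have "c = 0" unfolding c1 using wz by (simp add: infsum_0)
  then have a0: "a \<longlonglongrightarrow> 0" using c by simp
  show ?thesis
    unfolding S_def[symmetric] d_def[symmetric]
  proof (rule tendstoI)
    fix e :: real assume e: "0 < e"
    obtain N where N: "\<forall>n\<ge>N. norm (a n - 0) < e" using LIMSEQ_D[OF a0 e] by blast
    show "eventually (\<lambda>t. dist (d t) 0 < e) at_top"
      unfolding eventually_at_top_linorder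
    proof (intro exI[of _ "real N"] allI impI)
      fix t assume t: "real N \<le> t"
      have "d (real N + (t - real N)) \<le> d (real N)" by (rule dmono) (use t in auto)
      then have "d t \<le> a N" unfolding a_def by simp
      moreover have "a N < e" using N dnn[of "real N"] unfolding a_def by auto
      ultimately show "dist (d t) 0 < e" using dnn[of t] by simp
    qed
  qed
qed

lemma div_le_self':
  fixes x r :: real
  assumes "0 \<le> x" "1 \<le> r"
  shows "x / r \<le> x"
proof -
  have "x * 1 \<le> x * r" using assms by (intro mult_left_mono) auto
  then show ?thesis using assms by (simp add: divide_le_eq)
qed

theorem proposition5:
  fixes p :: real
    and P Pbar :: "real \<Rightarrow> nat \<Rightarrow> nat \<Rightarrow> real"
    and u :: "nat \<Rightarrow> real"
    and j k :: nat
  assumes p: "0 < p" "p \<le> 1"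
    and D: "ctmc_transition UNIV (Qgen p) P"
    and Dbar: "ctmc_transition {1..} (Qbar p) Pbar"
    and u: "stationary_distribution {1..} Pbar u"
    and jk: "1 \<le> j" "1 \<le> k"
  defines "m \<equiv> (\<lambda>i. u i / real i)"
  defines "a \<equiv> (\<lambda>i. m i / infsum m {1..})"
  shows "((\<lambda>t. P t j k * exp ((1 - 2 * p) * t)) \<longlongrightarrow> real j * m k) at_top \<and>
         ((\<lambda>t. P t j k / infsum (\<lambda>i. P t j i) {1..}) \<longlongrightarrow> a k) at_top"
proof -
  define S :: "nat set" where "S = {1..}"
  have p1: "p < 1"
  proof (rule ccontr)
    assume "\<not> p < 1"
    then have "p = 1" using p by simp
    then show False using p1_false[of Pbar u] Dbar u by simp
  qed
  have DS: "ctmc_transition S (Qbar p) Pbar" using Dbar unfolding S_def .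
  have un: "\<And>k. k \<in> S \<Longrightarrow> 0 \<le> u k" and u1: "(u has_sum 1) S"
    using u unfolding stationary_distribution_def S_def by auto
  have usum: "u summable_on S" using u1 has_sum_imp_summable by blast
  have jS: "j \<in> S" "k \<in> S" using jk unfolding S_def by auto
  define d where "d t = (\<Sum>\<^sub>\<infinity>i\<in>S. \<bar>Pbar t j i - u i\<bar>)" for t
  have d0: "(d \<longlongrightarrow> 0) at_top" unfolding d_def S_def using ergodic[OF p(1) p1 Dbar u jk(1)] .
  have nus: "(\<lambda>i. Pbar t j i) summable_on S" if "0 \<le> t" for t
    using ct_sum[OF DS that jS(1)] has_sum_imp_summable by blast
  have wsum: "(\<lambda>i. Pbar t j i - u i) summable_on S" if "0 \<le> t" for t
    using infsum_diff'(1)[OF nus[OF that] usum] .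
  have evt: "eventually (\<lambda>t::real. 0 \<le> t) at_top" using eventually_ge_at_top[of "0::real"] by simp
  have pb_lim: "((\<lambda>t. Pbar t j k) \<longlongrightarrow> u k) at_top"
  proof -
    have "((\<lambda>t. \<bar>Pbar t j k - u k\<bar>) \<longlongrightarrow> 0) at_top"
    proof (rule tendsto_sandwich[of "\<lambda>_. 0" _ _ d])
      show "eventually (\<lambda>t. \<bar>Pbar t j k - u k\<bar> \<le> d t) at_top"
        using evt
      proof eventually_elim
        case (elim t)
        have "sum (\<lambda>i. \<bar>Pbar t j i - u i\<bar>) {k} \<le> d t"
          unfolding d_def by (rule finite_sum_le_infsum) (use abs_summable_real[OF wsum[OF elim]] jS in auto)
        then show ?case by simp
      qed
    qed (use d0 in auto)
    then have "((\<lambda>t. Pbar t j k - u k) \<longlongrightarrow> 0) at_top" by (simp add: tendsto_rabs_zero_iff)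
    then show ?thesis by (simp add: LIM_zero_iff)
  qed
  have PB: "P t i k' = real i / real k' * exp ((2 * p - 1) * t) * Pbar t i k'"
    if "1 \<le> i" "1 \<le> k'" "0 \<le> t" for t i k'
    by (rule partB[OF p D Dbar that(2,1,3)])
  have part1: "((\<lambda>t. P t j k * exp ((1 - 2 * p) * t)) \<longlongrightarrow> real j * m k) at_top"
  proof -
    have "((\<lambda>t. real j / real k * Pbar t j k) \<longlongrightarrow> real j / real k * u k) at_top"
      by (intro tendsto_intros pb_lim)
    moreover have "eventually (\<lambda>t. real j / real k * Pbar t j k = P t j k * exp ((1 - 2 * p) * t)) at_top"
      using evt
    proof eventually_elim
      case (elim t)
      have "exp ((2 * p - 1) * t) * exp ((1 - 2 * p) * t) = 1"
        by (simp add: exp_add[symmetric] algebra_simps)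
      then show ?case using PB[OF jk elim] by (simp add: algebra_simps)
    qed
    ultimately have "((\<lambda>t. P t j k * exp ((1 - 2 * p) * t)) \<longlongrightarrow> real j / real k * u k) at_top"
      using Lim_transform_eventually by fastforce
    then show ?thesis unfolding m_def by simp
  qed
  define h where "h t = (\<Sum>\<^sub>\<infinity>i\<in>S. Pbar t j i / real i)" for t
  define M where "M = infsum m S"
  have ms: "m summable_on S"
    by (rule summable_on_comparison_test[OF usum]) (use un in \<open>auto simp: m_def S_def intro!: div_le_self'\<close>)
  have Mpos: "M > 0"
  proof -
    have mnn: "\<And>i. i \<in> S \<Longrightarrow> 0 \<le> m i" using un unfolding m_def by simp
    have M0: "M \<ge> 0" unfolding M_def by (rule infsum_nonneg) (use mnn in auto)
    have "M \<noteq> 0"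
    proof
      assume "M = 0"
      then have "m i = 0" if "i \<in> S" for i using nonneg_infsum_le_0D[of m S i] ms mnn that unfolding M_def by simp
      then have "u i = 0" if "i \<in> S" for i using that unfolding m_def S_def by auto
      then have "(u has_sum 0) S" by (intro has_sum_cong[THEN iffD2, OF _ has_sum_0]) auto
      then show False using u1 has_sum_unique by fastforce
    qed
    then show ?thesis using M0 by simp
  qed
  have hlim: "(h \<longlongrightarrow> M) at_top"
  proof -
    have "((\<lambda>t. \<bar>h t - M\<bar>) \<longlongrightarrow> 0) at_top"
    proof (rule tendsto_sandwich[of "\<lambda>_. 0" _ _ d])
      show "eventually (\<lambda>t. \<bar>h t - M\<bar> \<le> d t) at_top"
        using evt
      proof eventually_elim
        case (elim t)
        have s1: "(\<lambda>i. Pbar t j i / real i) summable_on S"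
          by (rule summable_on_comparison_test[OF nus[OF elim]])
             (use ct_nonneg[OF DS elim jS(1)] in \<open>auto simp: S_def intro!: div_le_self'\<close>)
        have "\<bar>h t - M\<bar> \<le> (\<Sum>\<^sub>\<infinity>i\<in>S. \<bar>Pbar t j i / real i - m i\<bar>)"
          unfolding h_def M_def by (rule infsum_diff_bound[OF s1 ms])
        also have "\<dots> \<le> d t" unfolding d_def
        proof (rule infsum_mono)
          show "(\<lambda>i. \<bar>Pbar t j i / real i - m i\<bar>) summable_on S"
            by (rule abs_summable_real) (use infsum_diff'(1)[OF s1 ms] in simp)
          show "(\<lambda>i. \<bar>Pbar t j i - u i\<bar>) summable_on S" by (rule abs_summable_real[OF wsum[OF elim]])
          fix i assume i: "i \<in> S"
          have "\<bar>Pbar t j i / real i - m i\<bar> = \<bar>Pbar t j i - u i\<bar> / real i"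
            unfolding m_def by (simp add: diff_divide_distrib[symmetric])
          also have "\<dots> \<le> \<bar>Pbar t j i - u i\<bar>" using i unfolding S_def by (intro div_le_self') auto
          finally show "\<bar>Pbar t j i / real i - m i\<bar> \<le> \<bar>Pbar t j i - u i\<bar>" .
        qed
        finally show ?case .
      qed
    qed (use d0 in auto)
    then have "((\<lambda>t. h t - M) \<longlongrightarrow> 0) at_top" by (simp add: tendsto_rabs_zero_iff)
    then show ?thesis by (simp add: LIM_zero_iff)
  qed
  have part2: "((\<lambda>t. P t j k / infsum (\<lambda>i. P t j i) {1..}) \<longlongrightarrow> a k) at_top"
  proof -
    have "((\<lambda>t. (Pbar t j k / real k) / h t) \<longlongrightarrow> (u k / real k) / M) at_top"
      by (intro tendsto_intros pb_lim hlim) (use Mpos jk in auto)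
    moreover have "eventually (\<lambda>t. (Pbar t j k / real k) / h t = P t j k / infsum (\<lambda>i. P t j i) {1..}) at_top"
      using evt
    proof eventually_elim
      case (elim t)
      define e where "e = exp ((2 * p - 1) * t)"
      have e: "e > 0" unfolding e_def by simp
      have "infsum (\<lambda>i. P t j i) {1..} = infsum (\<lambda>i. (e * real j) * (Pbar t j i / real i)) S"
        unfolding S_def by (rule infsum_cong) (use PB[OF jk(1) _ elim] in \<open>auto simp: e_def\<close>)
      also have "\<dots> = (e * real j) * h t" unfolding h_def by (rule infsum_cmult_right')
      finally have I: "infsum (\<lambda>i. P t j i) {1..} = (e * real j) * h t" .
      have "P t j k = (e * real j) * (Pbar t j k / real k)" using PB[OF jk elim] unfolding e_def by simp
      then show ?case using I e jk by simp
    qed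
    ultimately have "((\<lambda>t. P t j k / infsum (\<lambda>i. P t j i) {1..}) \<longlongrightarrow> (u k / real k) / M) at_top"
      using Lim_transform_eventually by fastforce
    then show ?thesis unfolding a_def M_def m_def S_def by simp
  qed
  show ?thesis using part1 part2 by blast
qed

end
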